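(* Let $h=h(u,v)$ be a smooth function with $h_{uu}h_{vv}\neq 0$ and consider the quasilinear system $$u_t=h_{uv}u_x+h_{vv}v_x,\qquad v_t=h_{uu}u_x+h_{uv}v_x .\tag{S}$$ (1) Let $u=u(x,t)$, $v=v(x,t)$ be a solution of (S) which is nondegenerate on a neighbourhood of a point $(x_0,t_0)$, i.e. $h_{uu}u_x^2-h_{vv}v_x^2\neq 0$ there, and put $u_0=u(x_0,t_0)$, $v_0=v(x_0,t_0)$. Then there exists a function $f=f(u,v)$ defined on a neighbourhood of $(u_0,v_0)$ and satisfying the linear PDE $$h_{uu}f_{vv}=h_{vv}f_{uu}$$ such that, on a sufficiently small neighbourhood of $(x_0,t_0)$, the identities $$x+t\,h_{uv}(u(x,t),v(x,t))=f_{uv}(u(x,t),v(x,t)),\qquad t\,h_{vv}(u(x,t),v(x,t))=f_{vv}(u(x,t),v(x,t))$$ hold. (2) Conversely, let $f=f(u,v)$ be any solution of $h_{uu}f_{vv}=h_{vv}f_{uu}$ defined on a neighbourhood of a point $(u_0,v_0)$, and let $(x_0,t_0)$ satisfy $x_0+t_0h_{uv}(u_0,v_0)=f_{uv}(u_0,v_0)$ and $t_0h_{vv}(u_0,v_0)=f_{vv}(u_0,v_0)$. Assume that $$\det\begin{pmatrix} t_0h_{uuv}-f_{uuv} & t_0h_{uvv}-f_{uvv}\\ t_0h_{uvv}-f_{uvv} & t_0h_{vvv}-f_{vvv}\end{pmatrix}\neq 0,$$ all derivatives evaluated at $(u_0,v_0)$. Then the functions $u=u(x,t)$, $v=v(x,t)$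 locally defined near $(x_0,t_0)$ (with $u(x_0,t_0)=u_0$, $v(x_0,t_0)=v_0$) by the implicit equations $$x+t\,h_{uv}(u,v)=f_{uv}(u,v),\qquad t\,h_{vv}(u,v)=f_{vv}(u,v)$$ satisfy the system (S).
   Context: Subscripts denote partial derivatives, e.g. $h_{uv}=\partial^2h/\partial u\partial v$. *)

theory Defs
  imports "HOL-Analysis.Analysis"
begin

definition pd1 :: "(real \<Rightarrow> real \<Rightarrow> real) \<Rightarrow> real \<Rightarrow> real \<Rightarrow> real" where
  "pd1 g = (\<lambda>a b. deriv (\<lambda>s. g s b) a)"

definition pd2 :: "(real \<Rightarrow> real \<Rightarrow> real) \<Rightarrow> real \<Rightarrow> real \<Rightarrow> real" where
  "pd2 g = (\<lambda>a b. deriv (\<lambda>s. g a s) b)"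

fun ipd :: "bool list \<Rightarrow> (real \<Rightarrow> real \<Rightarrow> real) \<Rightarrow> real \<Rightarrow> real \<Rightarrow> real" where
  "ipd [] g = g"
| "ipd (d # ds) g = ipd ds (if d then pd1 g else pd2 g)"

text \<open>Smoothness (C-infinity) on a set S of the plane: every iterated partial
  derivative is (Frechet) differentiable on S.\<close>

definition smooth2_on :: "(real \<times> real) set \<Rightarrow> (real \<Rightarrow> real \<Rightarrow> real) \<Rightarrow> bool" where
  "smooth2_on S g \<longleftrightarrow> (\<forall>ds. (\<lambda>(a, b). ipd ds g a b) differentiable_on S)"

end

theory Submission
  imports Defs
begin

type_synonym fn2 = "real \<Rightarrow> real \<Rightarrow> real"

definition eqon :: "(real \<times> real) set \<Rightarrow> fn2 \<Rightarrow> fn2 \<Rightarrow> bool" where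
  "eqon S g k \<longleftrightarrow> (\<forall>a b. (a, b) \<in> S \<longrightarrow> g a b = k a b)"

definition diff2 :: "(real \<times> real) set \<Rightarrow> fn2 \<Rightarrow> bool" where
  "diff2 S g \<longleftrightarrow> (\<lambda>(a, b). g a b) differentiable_on S"

lemma smooth2_on_iff:
  "smooth2_on S g \<longleftrightarrow> diff2 S g \<and> smooth2_on S (pd1 g) \<and> smooth2_on S (pd2 g)"
proof
  assume s: "smooth2_on S g"
  have "diff2 S g" using s[unfolded smooth2_on_def, rule_format, of "[]"] by (simp add: diff2_def)
  moreover have "smooth2_on S (pd1 g)" unfolding smooth2_on_def
  proof
    fix ds show "(\<lambda>(a, b). ipd ds (pd1 g) a b) differentiable_on S"
      using s[unfolded smooth2_on_def, rule_format, of "True # ds"] by simp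
  qed
  moreover have "smooth2_on S (pd2 g)" unfolding smooth2_on_def
  proof
    fix ds show "(\<lambda>(a, b). ipd ds (pd2 g) a b) differentiable_on S"
      using s[unfolded smooth2_on_def, rule_format, of "False # ds"] by simp
  qed
  ultimately show "diff2 S g \<and> smooth2_on S (pd1 g) \<and> smooth2_on S (pd2 g)" by blast
next
  assume h: "diff2 S g \<and> smooth2_on S (pd1 g) \<and> smooth2_on S (pd2 g)"
  show "smooth2_on S g" unfolding smooth2_on_def
  proof
    fix ds show "(\<lambda>(a, b). ipd ds g a b) differentiable_on S"
    proof (cases ds)
      case Nil then show ?thesis using h by (simp add: diff2_def)
    next
      case (Cons d ds') then show ?thesis using h unfolding smooth2_on_def by (cases d) auto
    qed
  qed
qed

lemma smooth_diff2: "smooth2_on S g \<Longrightarrow> diff2 S g"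
  using smooth2_on_iff by blast
lemma smooth_pd1: "smooth2_on S g \<Longrightarrow> smooth2_on S (pd1 g)"
  using smooth2_on_iff by blast
lemma smooth_pd2: "smooth2_on S g \<Longrightarrow> smooth2_on S (pd2 g)"
  using smooth2_on_iff by blast

lemma smooth_subset: "smooth2_on S g \<Longrightarrow> T \<subseteq> S \<Longrightarrow> smooth2_on T g"
  unfolding smooth2_on_def using differentiable_on_subset by blast

lemma ev_line1: "open S \<Longrightarrow> (a, b) \<in> S \<Longrightarrow> \<forall>\<^sub>F s in nhds a. (s, b) \<in> S"
proof -
  assume S: "open S" "(a, b) \<in> S"
  have "open ((\<lambda>s. (s, b)) -` S)"
    by (rule open_vimage[OF S(1)]) (auto intro!: continuous_intros)
  then have "\<forall>\<^sub>F s in nhds a. s \<in> (\<lambda>s. (s, b)) -` S"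
    by (rule eventually_nhds_in_open) (use S(2) in auto)
  then show ?thesis by simp
qed

lemma ev_line2: "open S \<Longrightarrow> (a, b) \<in> S \<Longrightarrow> \<forall>\<^sub>F s in nhds b. (a, s) \<in> S"
proof -
  assume S: "open S" "(a, b) \<in> S"
  have "open ((\<lambda>s. (a, s)) -` S)"
    by (rule open_vimage[OF S(1)]) (auto intro!: continuous_intros)
  then have "\<forall>\<^sub>F s in nhds b. s \<in> (\<lambda>s. (a, s)) -` S"
    by (rule eventually_nhds_in_open) (use S(2) in auto)
  then show ?thesis by simp
qed

lemma eqon_pd1: "open S \<Longrightarrow> eqon S g k \<Longrightarrow> eqon S (pd1 g) (pd1 k)"
  unfolding eqon_def pd1_def
proof (intro allI impI)
  fix a b assume S: "open S" and e: "\<forall>a b. (a, b) \<in> S \<longrightarrow> g a b = k a b" and ab: "(a, b) \<in> S"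
  show "deriv (\<lambda>s. g s b) a = deriv (\<lambda>s. k s b) a"
    by (rule deriv_cong_ev[OF eventually_mono[OF ev_line1[OF S ab]]]) (use e in auto)
qed

lemma eqon_pd2: "open S \<Longrightarrow> eqon S g k \<Longrightarrow> eqon S (pd2 g) (pd2 k)"
  unfolding eqon_def pd2_def
proof (intro allI impI)
  fix a b assume S: "open S" and e: "\<forall>a b. (a, b) \<in> S \<longrightarrow> g a b = k a b" and ab: "(a, b) \<in> S"
  show "deriv (\<lambda>s. g a s) b = deriv (\<lambda>s. k a s) b"
    by (rule deriv_cong_ev[OF eventually_mono[OF ev_line2[OF S ab]]]) (use e in auto)
qed

lemma eqon_sym: "eqon S g k \<Longrightarrow> eqon S k g" by (auto simp: eqon_def)
lemma eqon_trans: "eqon S g k \<Longrightarrow> eqon S k l \<Longrightarrow> eqon S g l" by (auto simp: eqon_def)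
lemma eqon_refl: "eqon S g g" by (auto simp: eqon_def)

lemma eqon_diff2: "open S \<Longrightarrow> eqon S g k \<Longrightarrow> diff2 S g \<Longrightarrow> diff2 S k"
  unfolding diff2_def differentiable_on_def differentiable_def
proof (intro ballI)
  fix p assume S: "open S" and e: "eqon S g k" and d: "\<forall>x\<in>S. \<exists>D. ((\<lambda>(a, b). g a b) has_derivative D) (at x within S)"
    and p: "p \<in> S"
  from d p obtain D where D: "((\<lambda>(a, b). g a b) has_derivative D) (at p within S)" by blast
  have "((\<lambda>(a, b). k a b) has_derivative D) (at p within S)"
    by (rule has_derivative_transform_within_open[OF D S p]) (use e in \<open>auto simp: eqon_def\<close>)
  then show "\<exists>D. ((\<lambda>(a, b). k a b) has_derivative D) (at p within S)" by blast
qed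

lemma eqon_ipd: "open S \<Longrightarrow> eqon S g k \<Longrightarrow> eqon S (ipd ds g) (ipd ds k)"
proof (induction ds arbitrary: g k)
  case Nil then show ?case by simp
next
  case (Cons d ds) then show ?case using eqon_pd1 eqon_pd2 by (cases d) auto
qed

lemma eqon_smooth: "open S \<Longrightarrow> eqon S g k \<Longrightarrow> smooth2_on S g \<Longrightarrow> smooth2_on S k"
  unfolding smooth2_on_def using eqon_ipd eqon_diff2 unfolding diff2_def by blast



lemma hasD_line1:
  fixes g :: fn2
  assumes D: "((\<lambda>(x, y). g x y) has_derivative D) (at (a, b))"
  shows "((\<lambda>s. g s b) has_real_derivative D (1, 0)) (at a)"
proof -
  have bl: "bounded_linear D" using has_derivative_bounded_linear[OF D] .
  have P: "((\<lambda>s. (s, b)) has_derivative (\<lambda>h. (h, 0))) (at a)"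
    by (rule has_derivative_Pair[OF has_derivative_ident has_derivative_const])
  have "((\<lambda>s. (\<lambda>(x, y). g x y) (s, b)) has_derivative (\<lambda>h. D (h, 0))) (at a)"
    using has_derivative_compose[OF P D] by (simp add: o_def)
  moreover have "(\<lambda>h. D (h, 0)) = (*) (D (1, 0))"
  proof
    fix h :: real
    have "D (h *\<^sub>R (1, 0)) = h *\<^sub>R D (1, 0)" by (rule linear_cmul[OF bounded_linear.linear[OF bl]])
    then show "D (h, 0) = D (1, 0) * h" by (simp add: mult.commute)
  qed
  ultimately show ?thesis unfolding has_field_derivative_def
    by simp
qed

lemma hasD_line2:
  fixes g :: fn2
  assumes D: "((\<lambda>(x, y). g x y) has_derivative D) (at (a, b))"
  shows "((\<lambda>s. g a s) has_real_derivative D (0, 1)) (at b)"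
proof -
  have bl: "bounded_linear D" using has_derivative_bounded_linear[OF D] .
  have P: "((\<lambda>s. (a, s)) has_derivative (\<lambda>h. (0, h))) (at b)"
    by (rule has_derivative_Pair[OF has_derivative_const has_derivative_ident])
  have "((\<lambda>s. (\<lambda>(x, y). g x y) (a, s)) has_derivative (\<lambda>h. D (0, h))) (at b)"
    using has_derivative_compose[OF P D] by (simp add: o_def)
  moreover have "(\<lambda>h. D (0, h)) = (*) (D (0, 1))"
  proof
    fix h :: real
    have "D (h *\<^sub>R (0, 1)) = h *\<^sub>R D (0, 1)" by (rule linear_cmul[OF bounded_linear.linear[OF bl]])
    then show "D (0, h) = D (0, 1) * h" by (simp add: mult.commute)
  qed
  ultimately show ?thesis unfolding has_field_derivative_def
    by simp
qed

lemma hasD_form: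
  fixes g :: fn2
  assumes D: "((\<lambda>(x, y). g x y) has_derivative D) (at (a, b))"
  shows "D = (\<lambda>(h, k). D (1, 0) * h + D (0, 1) * k)"
proof -
  have bl: "bounded_linear D" using has_derivative_bounded_linear[OF D] .
  show ?thesis
  proof (rule ext, clarsimp)
    fix h k :: real
    have l: "linear D" by (rule bounded_linear.linear[OF bl])
    have "(h, k) = h *\<^sub>R (1, 0) + k *\<^sub>R (0, 1)" by simp
    then have "D (h, k) = D (h *\<^sub>R (1, 0) + k *\<^sub>R (0, 1))" by metis
    also have "\<dots> = D (h *\<^sub>R (1, 0)) + D (k *\<^sub>R (0, 1))" by (rule linear_add[OF l])
    also have "\<dots> = h * D (1, 0) + k * D (0, 1)" by (simp only: linear_cmul[OF l] real_scaleR_def)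
    finally show "D (h, k) = D (1, 0) * h + D (0, 1) * k" by simp
  qed
qed

lemma diff2_hasD:
  assumes "diff2 S g" "open S" "(a, b) \<in> S"
  shows "\<exists>D. ((\<lambda>(x, y). g x y) has_derivative D) (at (a, b))"
proof -
  have "(\<lambda>(x, y). g x y) differentiable (at (a, b) within S)"
    using assms(1,3) unfolding diff2_def differentiable_on_def by blast
  then have "(\<lambda>(x, y). g x y) differentiable (at (a, b))"
    using at_within_open[OF assms(3,2)] by simp
  then show ?thesis unfolding differentiable_def by blast
qed

lemma diff2_line1:
  assumes "diff2 S g" "open S" "(a, b) \<in> S"
  shows "((\<lambda>s. g s b) has_real_derivative pd1 g a b) (at a)"
proof -
  obtain D where D: "((\<lambda>(x, y). g x y) has_derivative D) (at (a, b))" using diff2_hasD[OF assms] by blast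
  have "((\<lambda>s. g s b) has_real_derivative D (1, 0)) (at a)" by (rule hasD_line1[OF D])
  moreover then have "pd1 g a b = D (1, 0)" unfolding pd1_def by (rule DERIV_imp_deriv)
  ultimately show ?thesis by simp
qed

lemma diff2_line2:
  assumes "diff2 S g" "open S" "(a, b) \<in> S"
  shows "((\<lambda>s. g a s) has_real_derivative pd2 g a b) (at b)"
proof -
  obtain D where D: "((\<lambda>(x, y). g x y) has_derivative D) (at (a, b))" using diff2_hasD[OF assms] by blast
  have "((\<lambda>s. g a s) has_real_derivative D (0, 1)) (at b)" by (rule hasD_line2[OF D])
  moreover then have "pd2 g a b = D (0, 1)" unfolding pd2_def by (rule DERIV_imp_deriv)
  ultimately show ?thesis by simp
qed

lemma diff2_full:
  assumes "diff2 S g" "open S" "(a, b) \<in> S"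
  shows "((\<lambda>(x, y). g x y) has_derivative (\<lambda>(h, k). pd1 g a b * h + pd2 g a b * k)) (at (a, b))"
proof -
  obtain D where D: "((\<lambda>(x, y). g x y) has_derivative D) (at (a, b))" using diff2_hasD[OF assms] by blast
  have 1: "pd1 g a b = D (1, 0)" unfolding pd1_def by (rule DERIV_imp_deriv[OF hasD_line1[OF D]])
  have 2: "pd2 g a b = D (0, 1)" unfolding pd2_def by (rule DERIV_imp_deriv[OF hasD_line2[OF D]])
  show ?thesis using D hasD_form[OF D] 1 2 by simp
qed

lemma pd1_of: "((\<lambda>s. g s b) has_real_derivative X) (at a) \<Longrightarrow> pd1 g a b = X"
  unfolding pd1_def by (rule DERIV_imp_deriv)
lemma pd2_of: "((\<lambda>s. g a s) has_real_derivative X) (at b) \<Longrightarrow> pd2 g a b = X"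
  unfolding pd2_def by (rule DERIV_imp_deriv)

lemma diff2_add: "diff2 S g \<Longrightarrow> diff2 S k \<Longrightarrow> diff2 S (\<lambda>a b. g a b + k a b)"
  unfolding diff2_def
proof -
  assume "(\<lambda>(a, b). g a b) differentiable_on S" "(\<lambda>(a, b). k a b) differentiable_on S"
  then have "(\<lambda>p. (\<lambda>(a, b). g a b) p + (\<lambda>(a, b). k a b) p) differentiable_on S"
    by (rule differentiable_on_add)
  then show "(\<lambda>(a, b). g a b + k a b) differentiable_on S" by (simp add: case_prod_beta')
qed

lemma diff2_mult: "diff2 S g \<Longrightarrow> diff2 S k \<Longrightarrow> diff2 S (\<lambda>a b. g a b * k a b)"
  unfolding diff2_def
proof -
  assume "(\<lambda>(a, b). g a b) differentiable_on S" "(\<lambda>(a, b). k a b) differentiable_on S"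
  then have "(\<lambda>p. (\<lambda>(a, b). g a b) p * (\<lambda>(a, b). k a b) p) differentiable_on S"
    by (rule differentiable_on_mult)
  then show "(\<lambda>(a, b). g a b * k a b) differentiable_on S" by (simp add: case_prod_beta')
qed

lemma diff2_const: "diff2 S (\<lambda>a b. c)"
proof -
  have "(\<lambda>(a::real, b::real). c) = (\<lambda>p. c)" by auto
  then show ?thesis unfolding diff2_def by simp
qed

definition fsum :: "fn2 list \<Rightarrow> fn2" where
  "fsum L = (\<lambda>a b. sum_list (map (\<lambda>g. g a b) L))"

lemma fsum_Nil: "fsum [] = (\<lambda>a b. 0)" by (simp add: fsum_def)
lemma fsum_Cons: "fsum (g # L) = (\<lambda>a b. g a b + fsum L a b)" by (simp add: fsum_def)
lemma fsum_append: "fsum (L1 @ L2) = (\<lambda>a b. fsum L1 a b + fsum L2 a b)" by (simp add: fsum_def)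

definition sumsQ :: "(real \<times> real) set \<Rightarrow> fn2 set \<Rightarrow> fn2 \<Rightarrow> bool" where
  "sumsQ S Q k \<longleftrightarrow> (\<exists>L. set L \<subseteq> Q \<and> eqon S k (fsum L))"

lemma sums_add: "sumsQ S Q k1 \<Longrightarrow> sumsQ S Q k2 \<Longrightarrow> sumsQ S Q (\<lambda>a b. k1 a b + k2 a b)"
  unfolding sumsQ_def
proof -
  assume "\<exists>L. set L \<subseteq> Q \<and> eqon S k1 (fsum L)" "\<exists>L. set L \<subseteq> Q \<and> eqon S k2 (fsum L)"
  then obtain L1 L2 where "set L1 \<subseteq> Q" "eqon S k1 (fsum L1)" "set L2 \<subseteq> Q" "eqon S k2 (fsum L2)" by blast
  then show "\<exists>L. set L \<subseteq> Q \<and> eqon S (\<lambda>a b. k1 a b + k2 a b) (fsum L)"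
    by (intro exI[of _ "L1 @ L2"]) (auto simp: fsum_append eqon_def)
qed

lemma sums_eqon: "eqon S k k' \<Longrightarrow> sumsQ S Q k \<Longrightarrow> sumsQ S Q k'"
  unfolding sumsQ_def using eqon_sym eqon_trans by blast

lemma sums_single: "q \<in> Q \<Longrightarrow> sumsQ S Q q"
  unfolding sumsQ_def by (intro exI[of _ "[q]"]) (auto simp: fsum_def eqon_def)

lemma sums_zero: "sumsQ S Q (\<lambda>a b. 0)"
  unfolding sumsQ_def by (intro exI[of _ "[]"]) (auto simp: fsum_def eqon_def)

lemma pd1_add:
  assumes "diff2 S g" "diff2 S k" "open S" "(a, b) \<in> S"
  shows "pd1 (\<lambda>x y. g x y + k x y) a b = pd1 g a b + pd1 k a b"
  by (rule pd1_of) (rule DERIV_add[OF diff2_line1[OF assms(1,3,4)] diff2_line1[OF assms(2,3,4)]])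

lemma pd2_add:
  assumes "diff2 S g" "diff2 S k" "open S" "(a, b) \<in> S"
  shows "pd2 (\<lambda>x y. g x y + k x y) a b = pd2 g a b + pd2 k a b"
  by (rule pd2_of) (rule DERIV_add[OF diff2_line2[OF assms(1,3,4)] diff2_line2[OF assms(2,3,4)]])

lemma pd1_mult:
  assumes "diff2 S g" "diff2 S k" "open S" "(a, b) \<in> S"
  shows "pd1 (\<lambda>x y. g x y * k x y) a b = pd1 g a b * k a b + g a b * pd1 k a b"
proof (rule pd1_of)
  show "((\<lambda>s. g s b * k s b) has_real_derivative pd1 g a b * k a b + g a b * pd1 k a b) (at a)"
    using DERIV_mult[OF diff2_line1[OF assms(1,3,4)] diff2_line1[OF assms(2,3,4)]]
    by (simp add: mult.commute)
qed

lemma pd2_mult: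
  assumes "diff2 S g" "diff2 S k" "open S" "(a, b) \<in> S"
  shows "pd2 (\<lambda>x y. g x y * k x y) a b = pd2 g a b * k a b + g a b * pd2 k a b"
proof (rule pd2_of)
  show "((\<lambda>s. g a s * k a s) has_real_derivative pd2 g a b * k a b + g a b * pd2 k a b) (at b)"
    using DERIV_mult[OF diff2_line2[OF assms(1,3,4)] diff2_line2[OF assms(2,3,4)]]
    by (simp add: mult.commute)
qed

lemma pd1_const: "pd1 (\<lambda>x y. c) a b = 0" unfolding pd1_def by simp
lemma pd2_const: "pd2 (\<lambda>x y. c) a b = 0" unfolding pd2_def by simp

locale sumco =
  fixes S :: "(real \<times> real) set" and Q :: "fn2 set"
  assumes S_open: "open S"
    and Q_diff: "\<And>q. q \<in> Q \<Longrightarrow> diff2 S q"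
    and Q_pd1: "\<And>q. q \<in> Q \<Longrightarrow> sumsQ S Q (pd1 q)"
    and Q_pd2: "\<And>q. q \<in> Q \<Longrightarrow> sumsQ S Q (pd2 q)"
begin

lemma fsum_diff2: "set L \<subseteq> Q \<Longrightarrow> diff2 S (fsum L)"
proof (induction L)
  case Nil then show ?case by (simp add: fsum_Nil diff2_const)
next
  case (Cons q L) then show ?case unfolding fsum_Cons by (intro diff2_add[OF Q_diff]) auto
qed

lemma sums_diff2: "sumsQ S Q k \<Longrightarrow> diff2 S k"
  unfolding sumsQ_def using fsum_diff2 eqon_diff2[OF S_open] eqon_sym by blast

lemma fsum_pd1: "set L \<subseteq> Q \<Longrightarrow> sumsQ S Q (pd1 (fsum L))"
proof (induction L)
  case Nil then show ?case by (simp add: fsum_Nil pd1_const sums_zero)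
next
  case (Cons q L)
  have "sumsQ S Q (\<lambda>a b. pd1 q a b + pd1 (fsum L) a b)"
    using Cons by (intro sums_add[OF Q_pd1]) auto
  moreover have "eqon S (\<lambda>a b. pd1 q a b + pd1 (fsum L) a b) (pd1 (fsum (q # L)))"
    unfolding eqon_def fsum_Cons
  proof (intro allI impI)
    fix a b assume ab: "(a, b) \<in> S"
    have "q \<in> Q" "set L \<subseteq> Q" using Cons.prems by auto
    then show "pd1 q a b + pd1 (fsum L) a b = pd1 (\<lambda>a b. q a b + fsum L a b) a b"
      using pd1_add[OF Q_diff fsum_diff2 S_open ab] by simp
  qed
  ultimately show ?case by (rule sums_eqon[rotated])
qed

lemma fsum_pd2: "set L \<subseteq> Q \<Longrightarrow> sumsQ S Q (pd2 (fsum L))"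
proof (induction L)
  case Nil then show ?case by (simp add: fsum_Nil pd2_const sums_zero)
next
  case (Cons q L)
  have "sumsQ S Q (\<lambda>a b. pd2 q a b + pd2 (fsum L) a b)"
    using Cons by (intro sums_add[OF Q_pd2]) auto
  moreover have "eqon S (\<lambda>a b. pd2 q a b + pd2 (fsum L) a b) (pd2 (fsum (q # L)))"
    unfolding eqon_def fsum_Cons
  proof (intro allI impI)
    fix a b assume ab: "(a, b) \<in> S"
    have "q \<in> Q" "set L \<subseteq> Q" using Cons.prems by auto
    then show "pd2 q a b + pd2 (fsum L) a b = pd2 (\<lambda>a b. q a b + fsum L a b) a b"
      using pd2_add[OF Q_diff fsum_diff2 S_open ab] by simp
  qed
  ultimately show ?case by (rule sums_eqon[rotated])
qed

lemma sums_pd1: "sumsQ S Q k \<Longrightarrow> sumsQ S Q (pd1 k)"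
proof -
  assume "sumsQ S Q k"
  then obtain L where L: "set L \<subseteq> Q" "eqon S k (fsum L)" unfolding sumsQ_def by blast
  have "eqon S (pd1 (fsum L)) (pd1 k)" using eqon_pd1[OF S_open eqon_sym[OF L(2)]] .
  then show ?thesis using fsum_pd1[OF L(1)] sums_eqon by blast
qed

lemma sums_pd2: "sumsQ S Q k \<Longrightarrow> sumsQ S Q (pd2 k)"
proof -
  assume "sumsQ S Q k"
  then obtain L where L: "set L \<subseteq> Q" "eqon S k (fsum L)" unfolding sumsQ_def by blast
  have "eqon S (pd2 (fsum L)) (pd2 k)" using eqon_pd2[OF S_open eqon_sym[OF L(2)]] .
  then show ?thesis using fsum_pd2[OF L(1)] sums_eqon by blast
qed

lemma sums_ipd: "sumsQ S Q k \<Longrightarrow> sumsQ S Q (ipd ds k)"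
proof (induction ds arbitrary: k)
  case Nil then show ?case by simp
next
  case (Cons d ds) then show ?case using sums_pd1 sums_pd2 by (cases d) auto
qed

lemma sums_smooth: "sumsQ S Q k \<Longrightarrow> smooth2_on S k"
  unfolding smooth2_on_def using sums_ipd sums_diff2 unfolding diff2_def by blast

lemma Q_smooth: "q \<in> Q \<Longrightarrow> smooth2_on S q"
  using sums_smooth sums_single by blast

end



lemma pd1_const_fun: "pd1 (\<lambda>x y. c) = (\<lambda>x y. 0)" by (simp add: pd1_def)
lemma pd2_const_fun: "pd2 (\<lambda>x y. c) = (\<lambda>x y. 0)" by (simp add: pd2_def)
lemma pd1_fst_fun: "pd1 (\<lambda>x y. x) = (\<lambda>x y. 1)"
  unfolding pd1_def by (intro ext DERIV_imp_deriv DERIV_ident)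
lemma pd2_fst_fun: "pd2 (\<lambda>x y. x) = (\<lambda>x y. 0)" by (simp add: pd2_def)
lemma pd1_snd_fun: "pd1 (\<lambda>x y. y) = (\<lambda>x y. 0)" by (simp add: pd1_def)
lemma pd2_snd_fun: "pd2 (\<lambda>x y. y) = (\<lambda>x y. 1)"
  unfolding pd2_def by (intro ext DERIV_imp_deriv DERIV_ident)

lemma diff2_fst: "diff2 S (\<lambda>x y. x)"
proof -
  have "(\<lambda>(a::real, b::real). a) = fst" by auto
  then show ?thesis unfolding diff2_def
    by (simp add: differentiable_on_def bounded_linear_imp_differentiable bounded_linear_fst bounded_linear_snd)
qed
lemma diff2_snd: "diff2 S (\<lambda>x y. y)"
proof -
  have "(\<lambda>(a::real, b::real). b) = snd" by auto
  then show ?thesis unfolding diff2_def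
    by (simp add: differentiable_on_def bounded_linear_imp_differentiable bounded_linear_fst bounded_linear_snd)
qed

lemma smooth_lin:
  assumes "open S"
  shows "smooth2_on S (\<lambda>x y. c)" "smooth2_on S (\<lambda>x y. x)" "smooth2_on S (\<lambda>x y. y)"
proof -
  define Q where "Q = range (\<lambda>c. \<lambda>x::real. \<lambda>y::real. c) \<union> {\<lambda>x y. x, \<lambda>x y. y}"
  interpret sumco S Q
  proof
    show "open S" by fact
    fix q assume "q \<in> Q"
    then show "diff2 S q" unfolding Q_def using diff2_const diff2_fst diff2_snd by auto
    show "sumsQ S Q (pd1 q)" using \<open>q \<in> Q\<close> unfolding Q_def
      by (auto simp: pd1_const_fun pd1_fst_fun pd1_snd_fun intro!: sums_single)
    show "sumsQ S Q (pd2 q)" using \<open>q \<in> Q\<close> unfolding Q_def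
      by (auto simp: pd2_const_fun pd2_fst_fun pd2_snd_fun intro!: sums_single)
  qed
  show "smooth2_on S (\<lambda>x y. c)" "smooth2_on S (\<lambda>x y. x)" "smooth2_on S (\<lambda>x y. y)"
    by (auto intro!: Q_smooth simp: Q_def)
qed

lemma smooth_add:
  assumes "open S" "smooth2_on S g" "smooth2_on S k"
  shows "smooth2_on S (\<lambda>x y. g x y + k x y)"
proof -
  define Q where "Q = {g. smooth2_on S g}"
  interpret sumco S Q
  proof
    show "open S" by fact
    fix q assume "q \<in> Q"
    then show "diff2 S q" unfolding Q_def using smooth_diff2 by auto
    show "sumsQ S Q (pd1 q)" using \<open>q \<in> Q\<close> unfolding Q_def
      by (auto intro!: sums_single smooth_pd1)
    show "sumsQ S Q (pd2 q)" using \<open>q \<in> Q\<close> unfolding Q_def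
      by (auto intro!: sums_single smooth_pd2)
  qed
  have "sumsQ S Q (\<lambda>x y. g x y + k x y)"
    by (rule sums_add[OF sums_single sums_single]) (use assms in \<open>auto simp: Q_def\<close>)
  then show ?thesis by (rule sums_smooth)
qed

lemma smooth_mult:
  assumes "open S" "smooth2_on S g" "smooth2_on S k"
  shows "smooth2_on S (\<lambda>x y. g x y * k x y)"
proof -
  define Q where "Q = {q. \<exists>g k. smooth2_on S g \<and> smooth2_on S k \<and> q = (\<lambda>x y. g x y * k x y)}"
  interpret sumco S Q
  proof
    show "open S" by fact
    fix q assume "q \<in> Q"
    then obtain g k where gk: "smooth2_on S g" "smooth2_on S k" "q = (\<lambda>x y. g x y * k x y)"
      unfolding Q_def by blast
    then show "diff2 S q" using smooth_diff2 diff2_mult by auto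
    have "sumsQ S Q (\<lambda>x y. pd1 g x y * k x y + g x y * pd1 k x y)"
      by (rule sums_add[OF sums_single sums_single]) (use gk in \<open>auto simp: Q_def intro!: smooth_pd1\<close>)
    moreover have "eqon S (\<lambda>x y. pd1 g x y * k x y + g x y * pd1 k x y) (pd1 q)"
      unfolding eqon_def gk(3) using pd1_mult[OF smooth_diff2[OF gk(1)] smooth_diff2[OF gk(2)] assms(1)]
      by simp
    ultimately show "sumsQ S Q (pd1 q)" by (rule sums_eqon[rotated])
    have "sumsQ S Q (\<lambda>x y. pd2 g x y * k x y + g x y * pd2 k x y)"
      by (rule sums_add[OF sums_single sums_single]) (use gk in \<open>auto simp: Q_def intro!: smooth_pd2\<close>)
    moreover have "eqon S (\<lambda>x y. pd2 g x y * k x y + g x y * pd2 k x y) (pd2 q)"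
      unfolding eqon_def gk(3) using pd2_mult[OF smooth_diff2[OF gk(1)] smooth_diff2[OF gk(2)] assms(1)]
      by simp
    ultimately show "sumsQ S Q (pd2 q)" by (rule sums_eqon[rotated])
  qed
  show ?thesis by (rule Q_smooth) (use assms(2,3) in \<open>unfold Q_def, blast\<close>)
qed

lemma smooth_cmult:
  assumes "open S" "smooth2_on S g"
  shows "smooth2_on S (\<lambda>x y. c * g x y)"
  using smooth_mult[OF assms(1) smooth_lin(1)[OF assms(1)] assms(2)] .

lemma smooth_minus:
  assumes "open S" "smooth2_on S g"
  shows "smooth2_on S (\<lambda>x y. - g x y)"
  using smooth_cmult[OF assms, of "-1"] by simp

lemma smooth_diff:
  assumes "open S" "smooth2_on S g" "smooth2_on S k"
  shows "smooth2_on S (\<lambda>x y. g x y - k x y)"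
  using smooth_add[OF assms(1,2) smooth_minus[OF assms(1,3)]] by simp



lemma diff2_inverse:
  assumes "diff2 S g" "\<And>a b. (a, b) \<in> S \<Longrightarrow> g a b \<noteq> 0"
  shows "diff2 S (\<lambda>x y. inverse (g x y))"
proof -
  have "(\<lambda>p. inverse ((\<lambda>(a, b). g a b) p)) differentiable_on S"
    by (rule differentiable_on_inverse) (use assms in \<open>auto simp: diff2_def\<close>)
  then show ?thesis unfolding diff2_def by (simp add: case_prod_beta')
qed

lemma diff2_pow:
  assumes "diff2 S g"
  shows "diff2 S (\<lambda>x y. g x y ^ n)"
proof (induction n)
  case 0 then show ?case using diff2_const[of S 1] by simp
next
  case (Suc n) then show ?case using diff2_mult[OF assms Suc] by simp
qed

lemma inv_pow_deriv_eq:
  fixes c' c g' w :: real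
  shows "c' * w ^ n + c * (real n * (- (w * g' * w) * w ^ (n - Suc 0)))
        = c' * w ^ n + (- real n * c * g') * w ^ Suc n"
proof (cases n)
  case 0 then show ?thesis by simp
next
  case (Suc m) then show ?thesis by (simp add: algebra_simps power_Suc)
qed

lemma smooth_inverse:
  assumes S: "open S" and g: "smooth2_on S g" and nz: "\<And>a b. (a, b) \<in> S \<Longrightarrow> g a b \<noteq> 0"
  shows "smooth2_on S (\<lambda>x y. inverse (g x y))"
proof -
  define w where "w = (\<lambda>x y. inverse (g x y))"
  have dw: "diff2 S w" unfolding w_def by (rule diff2_inverse[OF smooth_diff2[OF g] nz])
  define Q where "Q = {q. \<exists>c n. smooth2_on S c \<and> q = (\<lambda>x y. c x y * w x y ^ n)}"
  have dg: "diff2 S g" using smooth_diff2[OF g] .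
  interpret sumco S Q
  proof
    show "open S" by fact
    fix q assume "q \<in> Q"
    then obtain c n where cq: "smooth2_on S c" "q = (\<lambda>x y. c x y * w x y ^ n)"
      unfolding Q_def by blast
    then show "diff2 S q" using diff2_mult[OF smooth_diff2[OF cq(1)] diff2_pow[OF dw]] by simp
    have sm: "smooth2_on S (\<lambda>x y. - real n * c x y * pd1 g x y)"
             "smooth2_on S (\<lambda>x y. - real n * c x y * pd2 g x y)"
      using smooth_mult[OF S smooth_cmult[OF S cq(1), of "- real n"] smooth_pd1[OF g]]
            smooth_mult[OF S smooth_cmult[OF S cq(1), of "- real n"] smooth_pd2[OF g]] by simp_all
    have "sumsQ S Q (\<lambda>x y. pd1 c x y * w x y ^ n + (- real n * c x y * pd1 g x y) * w x y ^ Suc n)"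
    proof (rule sums_add[OF sums_single sums_single])
      show "(\<lambda>x y. pd1 c x y * w x y ^ n) \<in> Q" unfolding Q_def using smooth_pd1[OF cq(1)] by blast
      show "(\<lambda>x y. (- real n * c x y * pd1 g x y) * w x y ^ Suc n) \<in> Q" unfolding Q_def using sm by blast
    qed
    moreover have "eqon S (\<lambda>x y. pd1 c x y * w x y ^ n + (- real n * c x y * pd1 g x y) * w x y ^ Suc n) (pd1 q)"
      unfolding eqon_def
    proof (intro allI impI)
      fix a b assume ab: "(a, b) \<in> S"
      have "((\<lambda>s. c s b * w s b ^ n) has_real_derivative
          pd1 c a b * w a b ^ n + c a b * (real n * (- (w a b * pd1 g a b * w a b) * w a b ^ (n - Suc 0)))) (at a)"
        unfolding w_def
        using DERIV_mult[OF diff2_line1[OF smooth_diff2[OF cq(1)] S ab]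
              DERIV_power[OF DERIV_inverse'[OF diff2_line1[OF dg S ab] nz[OF ab]], of n]] by (simp add: ac_simps)
      then show "pd1 c a b * w a b ^ n + (- real n * c a b * pd1 g a b) * w a b ^ Suc n = pd1 q a b"
        unfolding cq(2) inv_pow_deriv_eq by (rule pd1_of[symmetric])
    qed
    ultimately show "sumsQ S Q (pd1 q)" by (rule sums_eqon[rotated])
    have "sumsQ S Q (\<lambda>x y. pd2 c x y * w x y ^ n + (- real n * c x y * pd2 g x y) * w x y ^ Suc n)"
    proof (rule sums_add[OF sums_single sums_single])
      show "(\<lambda>x y. pd2 c x y * w x y ^ n) \<in> Q" unfolding Q_def using smooth_pd2[OF cq(1)] by blast
      show "(\<lambda>x y. (- real n * c x y * pd2 g x y) * w x y ^ Suc n) \<in> Q" unfolding Q_def using sm by blast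
    qed
    moreover have "eqon S (\<lambda>x y. pd2 c x y * w x y ^ n + (- real n * c x y * pd2 g x y) * w x y ^ Suc n) (pd2 q)"
      unfolding eqon_def
    proof (intro allI impI)
      fix a b assume ab: "(a, b) \<in> S"
      have "((\<lambda>s. c a s * w a s ^ n) has_real_derivative
          pd2 c a b * w a b ^ n + c a b * (real n * (- (w a b * pd2 g a b * w a b) * w a b ^ (n - Suc 0)))) (at b)"
        unfolding w_def
        using DERIV_mult[OF diff2_line2[OF smooth_diff2[OF cq(1)] S ab]
              DERIV_power[OF DERIV_inverse'[OF diff2_line2[OF dg S ab] nz[OF ab]], of n]] by (simp add: ac_simps)
      then show "pd2 c a b * w a b ^ n + (- real n * c a b * pd2 g a b) * w a b ^ Suc n = pd2 q a b"
        unfolding cq(2) inv_pow_deriv_eq by (rule pd2_of[symmetric])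
    qed
    ultimately show "sumsQ S Q (pd2 q)" by (rule sums_eqon[rotated])
  qed
  have "(\<lambda>x y. inverse (g x y)) = (\<lambda>x y. (\<lambda>x y. 1) x y * w x y ^ 1)" by (simp add: w_def)
  moreover have "(\<lambda>x y. (\<lambda>x y. 1) x y * w x y ^ 1) \<in> Q"
    unfolding Q_def using smooth_lin(1)[OF S, of 1] by blast
  ultimately show ?thesis using Q_smooth by simp
qed

lemma smooth_divide:
  assumes S: "open S" and "smooth2_on S f" "smooth2_on S g" and nz: "\<And>a b. (a, b) \<in> S \<Longrightarrow> g a b \<noteq> 0"
  shows "smooth2_on S (\<lambda>x y. f x y / g x y)"
  using smooth_mult[OF S assms(2) smooth_inverse[OF S assms(3) nz]] by (simp add: divide_inverse)



lemma chain_line: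
  fixes \<Phi> :: fn2
  assumes dP: "diff2 W \<Phi>" and W: "open W" and mem: "(U1, U2) \<in> W"
    and du: "(u has_real_derivative ux) (at x)" and dv: "(v has_real_derivative vx) (at x)"
    and U1: "u x = U1" and U2: "v x = U2"
  shows "((\<lambda>s. \<Phi> (u s) (v s)) has_real_derivative pd1 \<Phi> U1 U2 * ux + pd2 \<Phi> U1 U2 * vx) (at x)"
proof -
  have P: "((\<lambda>s. (u s, v s)) has_derivative (\<lambda>h. (ux * h, vx * h))) (at x)"
    using has_derivative_Pair[OF du[unfolded has_field_derivative_def] dv[unfolded has_field_derivative_def]] .
  have F: "((\<lambda>(a, b). \<Phi> a b) has_derivative (\<lambda>(h, k). pd1 \<Phi> U1 U2 * h + pd2 \<Phi> U1 U2 * k)) (at (u x, v x))"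
    using diff2_full[OF dP W mem] U1 U2 by simp
  have "((\<lambda>s. (\<lambda>(a, b). \<Phi> a b) (u s, v s)) has_derivative
       (\<lambda>h. (\<lambda>(h, k). pd1 \<Phi> U1 U2 * h + pd2 \<Phi> U1 U2 * k) (ux * h, vx * h))) (at x)"
    by (rule has_derivative_compose[OF P F])
  moreover have "(\<lambda>h. (\<lambda>(h, k). pd1 \<Phi> U1 U2 * h + pd2 \<Phi> U1 U2 * k) (ux * h, vx * h))
      = (*) (pd1 \<Phi> U1 U2 * ux + pd2 \<Phi> U1 U2 * vx)"
    by (auto simp: algebra_simps)
  ultimately show ?thesis unfolding has_field_derivative_def by simp
qed

lemma diff2_compose:
  fixes \<Phi> u v :: fn2
  assumes dP: "diff2 W \<Phi>" and W: "open W" and N: "open N" and du: "diff2 N u" and dv: "diff2 N v"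
    and mem: "\<And>x t. (x, t) \<in> N \<Longrightarrow> (u x t, v x t) \<in> W"
  shows "diff2 N (\<lambda>x t. \<Phi> (u x t) (v x t))"
  unfolding diff2_def
proof (rule differentiable_at_imp_differentiable_on, clarify)
  fix x t assume xt: "(x, t) \<in> N"
  have P: "((\<lambda>p. ((\<lambda>(x, t). u x t) p, (\<lambda>(x, t). v x t) p)) has_derivative
      (\<lambda>p. ((\<lambda>(h, k). pd1 u x t * h + pd2 u x t * k) p, (\<lambda>(h, k). pd1 v x t * h + pd2 v x t * k) p))) (at (x, t))"
    by (rule has_derivative_Pair[OF diff2_full[OF du N xt] diff2_full[OF dv N xt]])
  have F: "((\<lambda>(a, b). \<Phi> a b) has_derivative (\<lambda>(h, k). pd1 \<Phi> (u x t) (v x t) * h + pd2 \<Phi> (u x t) (v x t) * k))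
      (at ((\<lambda>(x, t). u x t) (x, t), (\<lambda>(x, t). v x t) (x, t)))"
    using diff2_full[OF dP W mem[OF xt]] by simp
  have "(\<lambda>p. (\<lambda>(a, b). \<Phi> a b) ((\<lambda>(x, t). u x t) p, (\<lambda>(x, t). v x t) p)) differentiable at (x, t)"
    using has_derivative_compose[OF P F] unfolding differentiable_def by blast
  moreover have "(\<lambda>p. (\<lambda>(a, b). \<Phi> a b) ((\<lambda>(x, t). u x t) p, (\<lambda>(x, t). v x t) p))
      = (\<lambda>(x, t). \<Phi> (u x t) (v x t))" by auto
  ultimately show "(\<lambda>(x, t). \<Phi> (u x t) (v x t)) differentiable at (x, t)" by simp
qed

lemma smooth_compose_inv:
  fixes u v :: fn2
  assumes N: "open N" and W: "open W" and du: "diff2 N u" and dv: "diff2 N v"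
    and mem: "\<And>x t. (x, t) \<in> N \<Longrightarrow> (u x t, v x t) \<in> W"
    and s11: "smooth2_on W p11" and s12: "smooth2_on W p12"
    and s21: "smooth2_on W p21" and s22: "smooth2_on W p22"
    and e: "\<And>x t. (x, t) \<in> N \<Longrightarrow> pd1 u x t = p11 (u x t) (v x t) \<and> pd2 u x t = p12 (u x t) (v x t)
                \<and> pd1 v x t = p21 (u x t) (v x t) \<and> pd2 v x t = p22 (u x t) (v x t)"
    and \<Phi>: "smooth2_on W \<Phi>"
  shows "smooth2_on N (\<lambda>x t. \<Phi> (u x t) (v x t))"
proof -
  define Q where "Q = {q. \<exists>\<Phi>. smooth2_on W \<Phi> \<and> q = (\<lambda>x t. \<Phi> (u x t) (v x t))}"
  interpret sumco N Q
  proof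
    show "open N" by fact
    fix q assume "q \<in> Q"
    then obtain \<Phi> where P: "smooth2_on W \<Phi>" "q = (\<lambda>x t. \<Phi> (u x t) (v x t))" unfolding Q_def by blast
    show "diff2 N q" unfolding P(2) by (rule diff2_compose[OF smooth_diff2[OF P(1)] W N du dv mem])
    have sm1: "smooth2_on W (\<lambda>a b. pd1 \<Phi> a b * p11 a b + pd2 \<Phi> a b * p21 a b)"
      by (intro smooth_add smooth_mult W smooth_pd1 smooth_pd2 P s11 s21)
    have sm2: "smooth2_on W (\<lambda>a b. pd1 \<Phi> a b * p12 a b + pd2 \<Phi> a b * p22 a b)"
      by (intro smooth_add smooth_mult W smooth_pd1 smooth_pd2 P s12 s22)
    have "eqon N (\<lambda>x t. (\<lambda>a b. pd1 \<Phi> a b * p11 a b + pd2 \<Phi> a b * p21 a b) (u x t) (v x t)) (pd1 q)"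
      unfolding eqon_def
    proof (intro allI impI)
      fix x t assume xt: "(x, t) \<in> N"
      have "((\<lambda>s. \<Phi> (u s t) (v s t)) has_real_derivative
          pd1 \<Phi> (u x t) (v x t) * pd1 u x t + pd2 \<Phi> (u x t) (v x t) * pd1 v x t) (at x)"
        by (rule chain_line[OF smooth_diff2[OF P(1)] W mem[OF xt] diff2_line1[OF du N xt] diff2_line1[OF dv N xt]]) auto
      then show "(\<lambda>a b. pd1 \<Phi> a b * p11 a b + pd2 \<Phi> a b * p21 a b) (u x t) (v x t) = pd1 q x t"
        unfolding P(2) using e[OF xt] by (simp add: pd1_of)
    qed
    then show "sumsQ N Q (pd1 q)" by (intro sums_eqon[OF _ sums_single]) (use sm1 in \<open>auto simp: Q_def\<close>)
    have "eqon N (\<lambda>x t. (\<lambda>a b. pd1 \<Phi> a b * p12 a b + pd2 \<Phi> a b * p22 a b) (u x t) (v x t)) (pd2 q)"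
      unfolding eqon_def
    proof (intro allI impI)
      fix x t assume xt: "(x, t) \<in> N"
      have "((\<lambda>s. \<Phi> (u x s) (v x s)) has_real_derivative
          pd1 \<Phi> (u x t) (v x t) * pd2 u x t + pd2 \<Phi> (u x t) (v x t) * pd2 v x t) (at t)"
        by (rule chain_line[OF smooth_diff2[OF P(1)] W mem[OF xt] diff2_line2[OF du N xt] diff2_line2[OF dv N xt]]) auto
      then show "(\<lambda>a b. pd1 \<Phi> a b * p12 a b + pd2 \<Phi> a b * p22 a b) (u x t) (v x t) = pd2 q x t"
        unfolding P(2) using e[OF xt] by (simp add: pd2_of)
    qed
    then show "sumsQ N Q (pd2 q)" by (intro sums_eqon[OF _ sums_single]) (use sm2 in \<open>auto simp: Q_def\<close>)
  qed
  show ?thesis by (rule Q_smooth) (use \<Phi> in \<open>auto simp: Q_def\<close>)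
qed



definition lmap :: "real \<Rightarrow> real \<Rightarrow> real \<Rightarrow> real \<Rightarrow> real \<times> real \<Rightarrow> real \<times> real" where
  "lmap A B C E = (\<lambda>z. (A * fst z + B * snd z, C * fst z + E * snd z))"

lemma bl_lmap: "bounded_linear (lmap A B C E)"
  unfolding lmap_def
  by (intro bounded_linear_Pair bounded_linear_add bounded_linear_compose[OF bounded_linear_mult_right]
      bounded_linear_fst bounded_linear_snd)

lemma lmap_apply: "lmap A B C E (h, k) = (A * h + B * k, C * h + E * k)"
  by (simp add: lmap_def)

lemma inv2_ids:
  fixes A B C E d h k :: real
  assumes d0: "d \<noteq> 0" and dd: "d = A * E - B * C"
  shows "E / d * (A * h + B * k) + - B / d * (C * h + E * k) = h"
        "- C / d * (A * h + B * k) + A / d * (C * h + E * k) = k"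
        "A * (E / d * h + - B / d * k) + B * (- C / d * h + A / d * k) = h"
        "C * (E / d * h + - B / d * k) + E * (- C / d * h + A / d * k) = k"
proof -
  have e1: "E * (A * h + B * k) - B * (C * h + E * k) = d * h" unfolding dd by (simp add: algebra_simps)
  have e2: "- C * (A * h + B * k) + A * (C * h + E * k) = d * k" unfolding dd by (simp add: algebra_simps)
  have e3: "A * (E * h - B * k) + B * (- C * h + A * k) = d * h" unfolding dd by (simp add: algebra_simps)
  have e4: "C * (E * h - B * k) + E * (- C * h + A * k) = d * k" unfolding dd by (simp add: algebra_simps)
  show "E / d * (A * h + B * k) + - B / d * (C * h + E * k) = h"
    using e1 d0 by (simp add: field_simps)
  show "- C / d * (A * h + B * k) + A / d * (C * h + E * k) = k"
    using e2 d0 by (simp add: field_simps)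
  show "A * (E / d * h + - B / d * k) + B * (- C / d * h + A / d * k) = h"
    using e3 d0 by (simp add: field_simps)
  show "C * (E / d * h + - B / d * k) + E * (- C / d * h + A / d * k) = k"
    using e4 d0 by (simp add: field_simps)
qed

lemma lmap_inv:
  assumes "A * E - B * C \<noteq> 0"
  shows "lmap (E / (A * E - B * C)) (- B / (A * E - B * C)) (- C / (A * E - B * C)) (A / (A * E - B * C))
         (lmap A B C E z) = z"
        "lmap A B C E (lmap (E / (A * E - B * C)) (- B / (A * E - B * C)) (- C / (A * E - B * C)) (A / (A * E - B * C)) z) = z"
proof -
  obtain h k where z: "z = (h, k)" by (cases z)
  note I = inv2_ids[OF assms refl, of h k]
  show "lmap (E / (A * E - B * C)) (- B / (A * E - B * C)) (- C / (A * E - B * C)) (A / (A * E - B * C))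
         (lmap A B C E z) = z"
    unfolding z lmap_apply using I(1,2) by (simp only: prod.inject) 
  show "lmap A B C E (lmap (E / (A * E - B * C)) (- B / (A * E - B * C)) (- C / (A * E - B * C)) (A / (A * E - B * C)) z) = z"
    unfolding z lmap_apply using I(3,4) by (simp only: prod.inject)
qed

lemma lmap_bij:
  assumes "A * E - B * C \<noteq> 0"
  shows "bij (lmap A B C E)"
  by (rule o_bij[of "lmap (E / (A * E - B * C)) (- B / (A * E - B * C)) (- C / (A * E - B * C)) (A / (A * E - B * C))"])
    (rule ext, simp add: lmap_inv[OF assms, simplified])+

lemma lmap_det:
  assumes b: "bij (lmap A B C E)"
  shows "A * E - B * C \<noteq> 0"
proof
  assume d: "A * E - B * C = 0"
  have i: "inj (lmap A B C E)" using bij_is_inj[OF b] .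
  have 0: "lmap A B C E (0, 0) = (0, 0)" by (simp add: lmap_def)
  have "lmap A B C E (E, - C) = (0, 0)" using d by (simp add: lmap_def algebra_simps)
  then have "(E, - C) = (0, 0)" using injD[OF i] 0 by metis
  moreover have "lmap A B C E (B, - A) = (0, 0)" using d by (simp add: lmap_def algebra_simps)
  then have "(B, - A) = (0, 0)" using injD[OF i] 0 by metis
  ultimately have "lmap A B C E (1, 0) = (0, 0)" by (simp add: lmap_def)
  then have "((1::real), (0::real)) = (0, 0)" using injD[OF i] 0 by metis
  then show False by simp
qed

lemma lmap_inv_apply:
  assumes "A * E - B * C \<noteq> 0"
  shows "inv (lmap A B C E) z = lmap (E / (A * E - B * C)) (- B / (A * E - B * C)) (- C / (A * E - B * C)) (A / (A * E - B * C)) z"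
  by (rule inv_f_eq[OF bij_is_inj[OF lmap_bij[OF assms]] lmap_inv(2)[OF assms]])

lemma smooth_cont:
  assumes "smooth2_on S g"
  shows "continuous_on S (\<lambda>p. g (fst p) (snd p))"
proof -
  have "(\<lambda>(a, b). g a b) differentiable_on S" using smooth_diff2[OF assms] by (simp add: diff2_def)
  then have "continuous_on S (\<lambda>(a, b). g a b)" by (rule differentiable_imp_continuous_on)
  then show ?thesis by (simp add: case_prod_beta')
qed

theorem ift2:
  fixes X T :: fn2
  assumes W: "open W" and p0: "(a0, b0) \<in> W" and sX: "smooth2_on W X" and sT: "smooth2_on W T"
    and J0: "pd1 X a0 b0 * pd2 T a0 b0 - pd2 X a0 b0 * pd1 T a0 b0 \<noteq> 0"
  obtains W' N u v where "open W'" "W' \<subseteq> W" "(a0, b0) \<in> W'" "open N" "(X a0 b0, T a0 b0) \<in> N"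
    "\<And>a b. (a, b) \<in> W' \<Longrightarrow> (X a b, T a b) \<in> N \<and> u (X a b) (T a b) = a \<and> v (X a b) (T a b) = b"
    "\<And>x t. (x, t) \<in> N \<Longrightarrow> (u x t, v x t) \<in> W' \<and> X (u x t) (v x t) = x \<and> T (u x t) (v x t) = t"
    "diff2 N u" "diff2 N v"
    "\<And>x t. (x, t) \<in> N \<Longrightarrow>
       (let a = u x t; b = v x t; J = pd1 X a b * pd2 T a b - pd2 X a b * pd1 T a b in
        J \<noteq> 0 \<and> pd1 u x t = pd2 T a b / J \<and> pd2 u x t = - pd2 X a b / J
        \<and> pd1 v x t = - pd1 T a b / J \<and> pd2 v x t = pd1 X a b / J)"
proof -
  define F where "F = (\<lambda>p. (X (fst p) (snd p), T (fst p) (snd p)))"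
  define L where "L = (\<lambda>p. lmap (pd1 X (fst p) (snd p)) (pd2 X (fst p) (snd p)) (pd1 T (fst p) (snd p)) (pd2 T (fst p) (snd p)))"
  define F' where "F' = (\<lambda>p. Blinfun (L p))"
  have F'a: "blinfun_apply (F' p) = L p" for p
    unfolding F'_def L_def by (rule bounded_linear_Blinfun_apply[OF bl_lmap])
  have derF: "(F has_derivative blinfun_apply (F' p)) (at p)" if "p \<in> W" for p
  proof -
    obtain a b where p: "p = (a, b)" by (cases p)
    have "((\<lambda>p. ((\<lambda>(a, b). X a b) p, (\<lambda>(a, b). T a b) p)) has_derivative
        (\<lambda>z. ((\<lambda>(h, k). pd1 X a b * h + pd2 X a b * k) z, (\<lambda>(h, k). pd1 T a b * h + pd2 T a b * k) z))) (at (a, b))"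
      by (rule has_derivative_Pair[OF diff2_full[OF smooth_diff2[OF sX] W] diff2_full[OF smooth_diff2[OF sT] W]])
        (use that p in auto)
    moreover have "(\<lambda>p. ((\<lambda>(a, b). X a b) p, (\<lambda>(a, b). T a b) p)) = F" by (auto simp: F_def)
    moreover have "(\<lambda>z. ((\<lambda>(h, k). pd1 X a b * h + pd2 X a b * k) z, (\<lambda>(h, k). pd1 T a b * h + pd2 T a b * k) z))
        = blinfun_apply (F' p)"
      unfolding F'a L_def p by (auto simp: lmap_def)
    ultimately show ?thesis unfolding p by simp
  qed
  have contF': "continuous_on W F'"
  proof (rule continuous_on_blinfun_componentwise)
    fix i :: "real \<times> real" assume "i \<in> Basis"
    then have i: "i = (1, 0) \<or> i = (0, 1)" by (auto simp: Basis_prod_def)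
    have c: "continuous_on W (\<lambda>p. pd1 X (fst p) (snd p))" "continuous_on W (\<lambda>p. pd2 X (fst p) (snd p))"
            "continuous_on W (\<lambda>p. pd1 T (fst p) (snd p))" "continuous_on W (\<lambda>p. pd2 T (fst p) (snd p))"
      using smooth_cont smooth_pd1 smooth_pd2 sX sT by blast+
    show "continuous_on W (\<lambda>x. blinfun_apply (F' x) i)"
      using i c unfolding F'a L_def by (auto simp: lmap_def intro!: continuous_intros)
  qed
  define A0 where "A0 = pd1 X a0 b0"
  define B0 where "B0 = pd2 X a0 b0"
  define C0 where "C0 = pd1 T a0 b0"
  define E0 where "E0 = pd2 T a0 b0"
  have d0: "A0 * E0 - B0 * C0 \<noteq> 0" using J0 by (simp add: A0_def B0_def C0_def E0_def)
  define M where "M = lmap (E0 / (A0 * E0 - B0 * C0)) (- B0 / (A0 * E0 - B0 * C0)) (- C0 / (A0 * E0 - B0 * C0)) (A0 / (A0 * E0 - B0 * C0))"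
  have invf: "Blinfun M o\<^sub>L F' (a0, b0) = id_blinfun"
  proof (rule blinfun_eqI)
    fix z
    have "L (a0, b0) = lmap A0 B0 C0 E0" by (simp add: L_def A0_def B0_def C0_def E0_def)
    then show "blinfun_apply (Blinfun M o\<^sub>L F' (a0, b0)) z = blinfun_apply id_blinfun z"
      unfolding M_def using lmap_inv(1)[OF d0]
      by (simp add: bounded_linear_Blinfun_apply[OF bl_lmap] F'a)
  qed
  obtain U' V g g' where U': "open U'" "U' \<subseteq> W" "(a0, b0) \<in> U'" and V: "open V" "F (a0, b0) \<in> V"
    and hom: "homeomorphism U' V F g"
    and derg: "\<And>y. y \<in> V \<Longrightarrow> (g has_derivative (g' y)) (at y)"
    and g': "\<And>y. y \<in> V \<Longrightarrow> g' y = inv (blinfun_apply (F' (g y)))"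
    and bij: "\<And>y. y \<in> V \<Longrightarrow> bij (blinfun_apply (F' (g y)))"
    by (rule inverse_function_theorem[OF W derF contF' p0 invf]) auto
  define u where "u = (\<lambda>x t. fst (g (x, t)))"
  define v where "v = (\<lambda>x t. snd (g (x, t)))"
  have hom1: "\<And>p. p \<in> U' \<Longrightarrow> g (F p) = p" "F ` U' = V" "\<And>y. y \<in> V \<Longrightarrow> F (g y) = y" "g ` V = U'"
    using hom unfolding homeomorphism_def by auto
  show ?thesis
  proof
    show "open U'" "U' \<subseteq> W" "(a0, b0) \<in> U'" "open V" by fact+
    show "(X a0 b0, T a0 b0) \<in> V" using V(2) by (simp add: F_def)
    fix a b assume ab: "(a, b) \<in> U'"
    then show "(X a b, T a b) \<in> V \<and> u (X a b) (T a b) = a \<and> v (X a b) (T a b) = b"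
    proof -
      have "F (a, b) \<in> V" using hom1(2) ab by blast
      moreover have "g (F (a, b)) = (a, b)" by (rule hom1(1)[OF ab])
      ultimately show ?thesis by (simp add: F_def u_def v_def)
    qed
  next
    fix x t assume xt: "(x, t) \<in> V"
    then show "(u x t, v x t) \<in> U' \<and> X (u x t) (v x t) = x \<and> T (u x t) (v x t) = t"
    proof -
      have "g (x, t) \<in> U'" using hom1(4) xt by blast
      moreover have "F (g (x, t)) = (x, t)" by (rule hom1(3)[OF xt])
      moreover have "(u x t, v x t) = g (x, t)" by (simp add: u_def v_def)
      ultimately show ?thesis by (simp add: F_def u_def v_def)
    qed
  next
    show "diff2 V u" unfolding diff2_def u_def
    proof (rule differentiable_at_imp_differentiable_on, clarify)
      fix x t assume "(x, t) \<in> V"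
      then have "(\<lambda>p. fst (g p)) differentiable at (x, t)"
        using has_derivative_fst[OF derg[OF \<open>(x, t) \<in> V\<close>]] unfolding differentiable_def by blast
      moreover have "(\<lambda>(x, t). fst (g (x, t))) = (\<lambda>p. fst (g p))" by auto
      ultimately show "(\<lambda>(x, t). fst (g (x, t))) differentiable at (x, t)" by simp
    qed
    show "diff2 V v" unfolding diff2_def v_def
    proof (rule differentiable_at_imp_differentiable_on, clarify)
      fix x t assume "(x, t) \<in> V"
      then have "(\<lambda>p. snd (g p)) differentiable at (x, t)"
        using has_derivative_snd[OF derg[OF \<open>(x, t) \<in> V\<close>]] unfolding differentiable_def by blast
      moreover have "(\<lambda>(x, t). snd (g (x, t))) = (\<lambda>p. snd (g p))" by auto
      ultimately show "(\<lambda>(x, t). snd (g (x, t))) differentiable at (x, t)" by simp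
    qed
  next
    fix x t assume xt: "(x, t) \<in> V"
    define a where "a = u x t"
    define b where "b = v x t"
    have gxt: "g (x, t) = (a, b)" by (simp add: a_def b_def u_def v_def)
    define J where "J = pd1 X a b * pd2 T a b - pd2 X a b * pd1 T a b"
    have Lab: "blinfun_apply (F' (g (x, t))) = lmap (pd1 X a b) (pd2 X a b) (pd1 T a b) (pd2 T a b)"
      unfolding F'a L_def gxt by simp
    have J: "J \<noteq> 0" using lmap_det bij[OF xt] unfolding Lab J_def by blast
    have G: "(g has_derivative lmap (pd2 T a b / J) (- pd2 X a b / J) (- pd1 T a b / J) (pd1 X a b / J)) (at (x, t))"
    proof -
      have "g' (x, t) = inv (lmap (pd1 X a b) (pd2 X a b) (pd1 T a b) (pd2 T a b))"
        using g'[OF xt] Lab by simp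
      also have "\<dots> = lmap (pd2 T a b / J) (- pd2 X a b / J) (- pd1 T a b / J) (pd1 X a b / J)"
        unfolding J_def by (rule ext, rule lmap_inv_apply[OF J[unfolded J_def]])
      finally show ?thesis using derg[OF xt] by simp
    qed
    have Gu: "((\<lambda>p. fst (g p)) has_derivative (\<lambda>z. fst (lmap (pd2 T a b / J) (- pd2 X a b / J) (- pd1 T a b / J) (pd1 X a b / J) z))) (at (x, t))"
      using has_derivative_fst[OF G] .
    have Gv: "((\<lambda>p. snd (g p)) has_derivative (\<lambda>z. snd (lmap (pd2 T a b / J) (- pd2 X a b / J) (- pd1 T a b / J) (pd1 X a b / J) z))) (at (x, t))"
      using has_derivative_snd[OF G] .
    have "((\<lambda>(x, t). u x t) has_derivative (\<lambda>z. fst (lmap (pd2 T a b / J) (- pd2 X a b / J) (- pd1 T a b / J) (pd1 X a b / J) z))) (at (x, t))"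
      using Gu unfolding u_def by (simp add: case_prod_beta')
    note Hu = this
    from pd1_of[where g=u and b=t and a=x, OF hasD_line1[OF Hu]] pd2_of[where g=u and b=t and a=x, OF hasD_line2[OF Hu]] have "pd1 u x t = pd2 T a b / J \<and> pd2 u x t = - pd2 X a b / J"
      by (simp add: lmap_def)
    moreover have "((\<lambda>(x, t). v x t) has_derivative (\<lambda>z. snd (lmap (pd2 T a b / J) (- pd2 X a b / J) (- pd1 T a b / J) (pd1 X a b / J) z))) (at (x, t))"
      using Gv unfolding v_def by (simp add: case_prod_beta')
    note Hv = this
    from pd1_of[where g=v and b=t and a=x, OF hasD_line1[OF Hv]] pd2_of[where g=v and b=t and a=x, OF hasD_line2[OF Hv]] have "pd1 v x t = - pd1 T a b / J \<and> pd2 v x t = pd1 X a b / J"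
      by (simp add: lmap_def)
    ultimately show "let a = u x t; b = v x t; J = pd1 X a b * pd2 T a b - pd2 X a b * pd1 T a b in
        J \<noteq> 0 \<and> pd1 u x t = pd2 T a b / J \<and> pd2 u x t = - pd2 X a b / J
        \<and> pd1 v x t = - pd1 T a b / J \<and> pd2 v x t = pd1 X a b / J"
      using J unfolding Let_def a_def[symmetric] b_def[symmetric] J_def[symmetric] by simp
  qed
qed



lemma rect_exists:
  fixes a b :: real
  assumes S: "open S" and ab: "(a, b) \<in> S"
  obtains r where "r > 0" "{a - r..a + r} \<times> {b - r..b + r} \<subseteq> S"
proof -
  obtain e where e: "e > 0" "ball (a, b) e \<subseteq> S" using S ab open_contains_ball by blast
  define r where "r = e / 3"
  have r: "r > 0" using e by (simp add: r_def)
  have "{a - r..a + r} \<times> {b - r..b + r} \<subseteq> S"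
  proof clarify
    fix x y assume x: "x \<in> {a - r..a + r}" and y: "y \<in> {b - r..b + r}"
    have "dist (a, b) (x, y) = norm (a - x, b - y)" by (simp add: dist_norm)
    also have "\<dots> \<le> norm (a - x) + norm (b - y)" by (rule norm_Pair_le)
    also have "\<dots> \<le> r + r" using x y by auto
    also have "\<dots> < e" using e by (simp add: r_def)
    finally show "(x, y) \<in> S" using e(2) by auto
  qed
  then show ?thesis using r that by blast
qed

locale rect =
  fixes S :: "(real \<times> real) set" and c c' d d' :: real
  assumes S: "open S" and cc: "c < c'" and dd: "d < d'"
    and sub: "{c..c'} \<times> {d..d'} \<subseteq> S"
begin

lemma in_S: "x \<in> {c..c'} \<Longrightarrow> y \<in> {d..d'} \<Longrightarrow> (x, y) \<in> S" using sub by auto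

lemma cont_line2:
  assumes k: "smooth2_on S k" and x: "x \<in> {c..c'}"
  shows "continuous_on {d..d'} (\<lambda>s. k x s)"
proof -
  have "continuous_on {d..d'} (\<lambda>s. (\<lambda>p. k (fst p) (snd p)) ((\<lambda>s. (x, s)) s))"
    by (rule continuous_on_compose2[OF smooth_cont[OF k]]) (use x in_S in \<open>auto intro!: continuous_intros\<close>)
  then show ?thesis by simp
qed

lemma cont_line1:
  assumes k: "smooth2_on S k" and y: "y \<in> {d..d'}"
  shows "continuous_on {c..c'} (\<lambda>s. k s y)"
proof -
  have "continuous_on {c..c'} (\<lambda>s. (\<lambda>p. k (fst p) (snd p)) ((\<lambda>s. (s, y)) s))"
    by (rule continuous_on_compose2[OF smooth_cont[OF k]]) (use y in_S in \<open>auto intro!: continuous_intros\<close>)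
  then show ?thesis by simp
qed

lemma lei:
  assumes k: "smooth2_on S k" and x: "x \<in> {c<..<c'}" and y: "y \<in> {d..d'}"
  shows "((\<lambda>x. integral {d..y} (\<lambda>s. k x s)) has_real_derivative integral {d..y} (\<lambda>s. pd1 k x s)) (at x)"
proof -
  have "((\<lambda>x. integral (cbox d y) (\<lambda>s. k x s)) has_field_derivative integral (cbox d y) (\<lambda>s. pd1 k x s)) (at x within {c..c'})"
  proof (rule leibniz_rule_field_derivative)
    fix x t assume "x \<in> {c..c'}" "t \<in> cbox d y"
    then have xt: "(x, t) \<in> S" using y in_S by auto
    show "((\<lambda>x. k x t) has_field_derivative pd1 k x t) (at x within {c..c'})"
      using diff2_line1[OF smooth_diff2[OF k] S xt] by (rule has_field_derivative_at_within)
  next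
    fix x assume x: "x \<in> {c..c'}"
    have "continuous_on {d..y} (\<lambda>s. k x s)"
      by (rule continuous_on_subset[OF cont_line2[OF k x]]) (use y in auto)
    then show "(\<lambda>s. k x s) integrable_on cbox d y"
      by (simp add: integrable_continuous_interval)
  next
    have "continuous_on ({c..c'} \<times> cbox d y) (\<lambda>p. pd1 k (fst p) (snd p))"
      by (rule continuous_on_subset[OF smooth_cont[OF smooth_pd1[OF k]]]) (use y sub in auto)
    then show "continuous_on ({c..c'} \<times> cbox d y) (\<lambda>(x, t). pd1 k x t)"
      by (simp add: case_prod_beta')
  next
    show "x \<in> {c..c'}" using x by auto
    show "convex {c..c'}" by simp
  qed
  then show ?thesis using at_within_Icc_at[of c x c'] x by simp
qed

lemma ftcy:
  assumes k: "smooth2_on S k" and x: "x \<in> {c..c'}" and y: "y \<in> {d<..<d'}"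
  shows "((\<lambda>y. integral {d..y} (\<lambda>s. k x s)) has_real_derivative k x y) (at y)"
proof -
  have "((\<lambda>y. integral {d..y} (\<lambda>s. k x s)) has_real_derivative k x y) (at y within {d..d'})"
    using integral_has_real_derivative[OF cont_line2[OF k x], of y] y by auto
  then show ?thesis using at_within_Icc_at[of d y d'] y by simp
qed

lemma ftcx:
  assumes k: "smooth2_on S k" and y: "y \<in> {d..d'}" and x: "x \<in> {c<..<c'}"
  shows "((\<lambda>x. integral {c..x} (\<lambda>s. k s y)) has_real_derivative k x y) (at x)"
proof -
  have "((\<lambda>x. integral {c..x} (\<lambda>s. k s y)) has_real_derivative k x y) (at x within {c..c'})"
    using integral_has_real_derivative[OF cont_line1[OF k y], of x] x by auto
  then show ?thesis using at_within_Icc_at[of c x c'] x by simp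
qed

lemma ftcid:
  assumes g: "smooth2_on S g" and x: "x \<in> {c..c'}" and y: "y \<in> {d..d'}"
  shows "g x y = g x d + integral {d..y} (\<lambda>s. pd2 g x s)"
proof -
  have "((\<lambda>s. pd2 g x s) has_integral (g x y - g x d)) {d..y}"
  proof (rule fundamental_theorem_of_calculus)
    show "d \<le> y" using y by auto
    fix s assume s: "s \<in> {d..y}"
    then have "(x, s) \<in> S" using in_S x y by auto
    from diff2_line2[OF smooth_diff2[OF g] S this]
    have "((\<lambda>s. g x s) has_real_derivative pd2 g x s) (at s within {d..y})"
      by (rule has_field_derivative_at_within)
    then show "((\<lambda>s. g x s) has_vector_derivative pd2 g x s) (at s within {d..y})"
      by (simp add: has_real_derivative_iff_has_vector_derivative)
  qed
  then show ?thesis by (simp add: integral_unique)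
qed

end

lemma schwarz:
  assumes S: "open S" and g: "smooth2_on S g" and ab: "(a, b) \<in> S"
  shows "pd2 (pd1 g) a b = pd1 (pd2 g) a b"
proof -
  obtain r where r: "r > 0" "{a - r..a + r} \<times> {b - r..b + r} \<subseteq> S" using rect_exists[OF S ab] .
  interpret rect S "a - r" "a + r" "b - r" "b + r" using r S by unfold_locales auto
  define Ob where "Ob = {a - r<..<a + r} \<times> {b - r<..<b + r}"
  have Ob: "open Ob" "(a, b) \<in> Ob" unfolding Ob_def using r by (auto intro!: open_Times)
  define G where "G = (\<lambda>x y. pd1 g x (b - r) + integral {b - r..y} (\<lambda>s. pd1 (pd2 g) x s))"
  have "eqon Ob (pd1 g) G"
    unfolding eqon_def
  proof (intro allI impI)
    fix x y assume "(x, y) \<in> Ob"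
    then have x: "x \<in> {a - r<..<a + r}" and y: "y \<in> {b - r..b + r}" by (auto simp: Ob_def)
    have ev: "\<forall>\<^sub>F x' in nhds x. g x' y = g x' (b - r) + integral {b - r..y} (\<lambda>s. pd2 g x' s)"
    proof (rule eventually_mono[OF eventually_nhds_in_open[OF open_greaterThanLessThan x]])
      fix x' assume "x' \<in> {a - r<..<a + r}"
      then show "g x' y = g x' (b - r) + integral {b - r..y} (\<lambda>s. pd2 g x' s)"
        using ftcid[OF g _ y] by auto
    qed
    have xb: "(x, b - r) \<in> S" using x r by (intro in_S) auto
    have D: "((\<lambda>x'. g x' (b - r) + integral {b - r..y} (\<lambda>s. pd2 g x' s)) has_real_derivative G x y) (at x)"
      unfolding G_def
      by (rule DERIV_add[OF diff2_line1[OF smooth_diff2[OF g] S xb] lei[OF smooth_pd2[OF g] x y]])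
    have "pd1 g x y = deriv (\<lambda>x'. g x' y) x" by (simp add: pd1_def)
    also have "\<dots> = deriv (\<lambda>x'. g x' (b - r) + integral {b - r..y} (\<lambda>s. pd2 g x' s)) x"
      by (rule deriv_cong_ev[OF ev refl])
    also have "\<dots> = G x y" by (rule DERIV_imp_deriv[OF D])
    finally show "pd1 g x y = G x y" .
  qed
  then have "eqon Ob (pd2 (pd1 g)) (pd2 G)" by (rule eqon_pd2[OF Ob(1)])
  moreover have "pd2 G a b = pd1 (pd2 g) a b"
  proof (rule pd2_of)
    have "a \<in> {a - r..a + r}" "b \<in> {b - r<..<b + r}" using r by auto
    from DERIV_add[OF DERIV_const ftcy[OF smooth_pd1[OF smooth_pd2[OF g]] this]]
    show "((\<lambda>s. G a s) has_real_derivative pd1 (pd2 g) a b) (at b)" unfolding G_def by simp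
  qed
  ultimately show ?thesis using Ob(2) by (simp add: eqon_def)
qed

lemma schwarz_eqon:
  assumes S: "open S" and g: "smooth2_on S g"
  shows "eqon S (pd2 (pd1 g)) (pd1 (pd2 g))"
  using schwarz[OF S g] by (auto simp: eqon_def)



lemma poincare:
  assumes S: "open S" and P: "smooth2_on S P" and R: "smooth2_on S R"
    and comp: "eqon S (pd2 P) (pd1 R)" and ab: "(a, b) \<in> S"
  obtains Ob f where "open Ob" "(a, b) \<in> Ob" "Ob \<subseteq> S" "smooth2_on Ob f"
    "eqon Ob (pd1 f) P" "eqon Ob (pd2 f) R"
proof -
  obtain r where r: "r > 0" "{a - r..a + r} \<times> {b - r..b + r} \<subseteq> S" using rect_exists[OF S ab] .
  interpret rect S "a - r" "a + r" "b - r" "b + r" using r S by unfold_locales auto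
  define c where "c = a - r"
  define d where "d = b - r"
  define X where "X = {a - r<..<a + r}"
  define Y where "Y = {b - r<..<b + r}"
  define Ob where "Ob = X \<times> Y"
  have Ob: "open Ob" "(a, b) \<in> Ob" "Ob \<subseteq> S"
    unfolding Ob_def X_def Y_def using r in_S by (auto intro!: open_Times)
  define f where "f = (\<lambda>x y. integral {c..x} (\<lambda>s. P s d) + integral {d..y} (\<lambda>s. R x s))"
  have dy: "((\<lambda>y. f x y) has_real_derivative R x y) (at y)" if xy: "(x, y) \<in> Ob" for x y
  proof -
    have "x \<in> {a - r..a + r}" "y \<in> {b - r<..<b + r}" using xy by (auto simp: Ob_def X_def Y_def)
    from DERIV_add[OF DERIV_const ftcy[OF R this]]
    show ?thesis unfolding f_def d_def by simp
  qed
  have dx: "((\<lambda>x. f x y) has_real_derivative P x y) (at x)" if xy: "(x, y) \<in> Ob" for x y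
  proof -
    have x: "x \<in> {a - r<..<a + r}" and y: "y \<in> {b - r..b + r}" using xy by (auto simp: Ob_def X_def Y_def)
    have d0: "d \<in> {b - r..b + r}" using r by (auto simp: d_def)
    have "((\<lambda>x. f x y) has_real_derivative P x d + integral {d..y} (\<lambda>s. pd1 R x s)) (at x)"
      unfolding f_def c_def d_def using DERIV_add[OF ftcx[OF P d0[unfolded d_def] x] lei[OF R x y]] .
    moreover have "integral {d..y} (\<lambda>s. pd1 R x s) = integral {d..y} (\<lambda>s. pd2 P x s)"
    proof (rule integral_cong)
      fix s assume "s \<in> {d..y}"
      then have "(x, s) \<in> S" using x y by (intro in_S) (auto simp: d_def)
      then show "pd1 R x s = pd2 P x s" using comp by (simp add: eqon_def)
    qed
    moreover have "P x y = P x d + integral {d..y} (\<lambda>s. pd2 P x s)"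
      unfolding d_def by (rule ftcid[OF P]) (use x y in auto)
    ultimately show ?thesis by simp
  qed
  have e1: "eqon Ob (pd1 f) P" unfolding eqon_def using dx pd1_of by blast
  have e2: "eqon Ob (pd2 f) R" unfolding eqon_def using dy pd2_of by blast
  have diff: "diff2 Ob f"
    unfolding diff2_def
  proof (rule differentiable_at_imp_differentiable_on, clarify)
    fix x y assume xy: "(x, y) \<in> Ob"
    have "((\<lambda>(x, y). f x y) has_derivative (\<lambda>(tx, ty). (*) (P x y) tx + blinfun_mult_right (R x y) ty)) (at (x, y) within X \<times> Y)"
    proof (rule has_derivative_partialsI)
      show "((\<lambda>x. f x y) has_derivative (*) (P x y)) (at x within X)"
        using dx[OF xy] unfolding has_field_derivative_def by (rule has_derivative_at_withinI)
    next
      fix x y assume "x \<in> X" "y \<in> Y"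
      then have "(x, y) \<in> Ob" by (simp add: Ob_def)
      then show "((\<lambda>y. f x y) has_derivative blinfun_apply (blinfun_mult_right (R x y))) (at y within Y)"
        using dy has_field_derivative_eq_has_derivative_blinfun has_field_derivative_at_within by blast
    next
      have "continuous_on Ob (\<lambda>p. R (fst p) (snd p))"
        by (rule continuous_on_subset[OF smooth_cont[OF R] Ob(3)])
      then have "continuous (at (x, y) within X \<times> Y) (\<lambda>p. R (fst p) (snd p))"
        using xy unfolding Ob_def continuous_on_eq_continuous_within by auto
      then show "continuous (at (x, y) within X \<times> Y) (\<lambda>(x, y). blinfun_mult_right (R x y))"
        by (auto simp: case_prod_beta' intro!: continuous_intros)
    next
      show "y \<in> Y" "convex Y" using xy by (auto simp: Ob_def Y_def)
    qed
    then have "((\<lambda>(x, y). f x y) has_derivative (\<lambda>(tx, ty). (*) (P x y) tx + blinfun_mult_right (R x y) ty)) (at (x, y))"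
      using at_within_open[OF xy Ob(1)] unfolding Ob_def by simp
    then show "(\<lambda>(x, y). f x y) differentiable at (x, y)" unfolding differentiable_def by blast
  qed
  have "smooth2_on Ob f"
    unfolding smooth2_on_iff[of Ob f]
    using diff eqon_smooth[OF Ob(1) eqon_sym[OF e1] smooth_subset[OF P Ob(3)]]
      eqon_smooth[OF Ob(1) eqon_sym[OF e2] smooth_subset[OF R Ob(3)]] by blast
  then show ?thesis using that Ob e1 e2 by blast
qed



lemma sym3:
  assumes S: "open S" and g: "smooth2_on S g" and ab: "(a, b) \<in> S"
  shows "pd1 (pd2 g) a b = pd2 (pd1 g) a b"
    and "pd1 (pd2 (pd2 g)) a b = pd2 (pd2 (pd1 g)) a b"
    and "pd1 (pd1 (pd2 g)) a b = pd2 (pd1 (pd1 g)) a b"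
    and "pd2 (pd1 (pd2 g)) a b = pd2 (pd2 (pd1 g)) a b"
    and "pd1 (pd2 (pd1 g)) a b = pd2 (pd1 (pd1 g)) a b"
proof -
  have E: "eqon S (pd1 (pd2 g)) (pd2 (pd1 g))" using eqon_sym[OF schwarz_eqon[OF S g]] .
  show "pd1 (pd2 g) a b = pd2 (pd1 g) a b" using E ab by (simp add: eqon_def)
  have "pd1 (pd2 (pd2 g)) a b = pd2 (pd1 (pd2 g)) a b" using schwarz[OF S smooth_pd2[OF g] ab] by simp
  also have "\<dots> = pd2 (pd2 (pd1 g)) a b" using eqon_pd2[OF S E] ab by (simp add: eqon_def)
  finally show "pd1 (pd2 (pd2 g)) a b = pd2 (pd2 (pd1 g)) a b" .
  have "pd1 (pd1 (pd2 g)) a b = pd1 (pd2 (pd1 g)) a b" using eqon_pd1[OF S E] ab by (simp add: eqon_def)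
  also have "\<dots> = pd2 (pd1 (pd1 g)) a b" using schwarz[OF S smooth_pd1[OF g] ab] by simp
  finally show "pd1 (pd1 (pd2 g)) a b = pd2 (pd1 (pd1 g)) a b" .
  show "pd2 (pd1 (pd2 g)) a b = pd2 (pd2 (pd1 g)) a b" using eqon_pd2[OF S E] ab by (simp add: eqon_def)
  show "pd1 (pd2 (pd1 g)) a b = pd2 (pd1 (pd1 g)) a b" using schwarz[OF S smooth_pd1[OF g] ab] by simp
qed

lemma pd1_div:
  assumes "diff2 S g" "diff2 S k" "open S" "(a, b) \<in> S" "k a b \<noteq> 0"
  shows "pd1 (\<lambda>x y. g x y / k x y) a b = (pd1 g a b * k a b - g a b * pd1 k a b) / (k a b * k a b)"
  by (rule pd1_of) (rule DERIV_divide[OF diff2_line1[OF assms(1,3,4)] diff2_line1[OF assms(2,3,4)] assms(5)])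

lemma pd2_div:
  assumes "diff2 S g" "diff2 S k" "open S" "(a, b) \<in> S" "k a b \<noteq> 0"
  shows "pd2 (\<lambda>x y. g x y / k x y) a b = (pd2 g a b * k a b - g a b * pd2 k a b) / (k a b * k a b)"
  by (rule pd2_of) (rule DERIV_divide[OF diff2_line2[OF assms(1,3,4)] diff2_line2[OF assms(2,3,4)] assms(5)])

lemma pd1_diffmult:
  assumes "diff2 S g" "diff2 S k" "diff2 S l" "open S" "(a, b) \<in> S"
  shows "pd1 (\<lambda>x y. g x y - k x y * l x y) a b = pd1 g a b - (pd1 k a b * l a b + k a b * pd1 l a b)"
  using DERIV_diff[OF diff2_line1[OF assms(1,4,5)] DERIV_mult[OF diff2_line1[OF assms(2,4,5)] diff2_line1[OF assms(3,4,5)]]] by (intro pd1_of) (simp add: algebra_simps)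

lemma pd2_diffmult:
  assumes "diff2 S g" "diff2 S k" "diff2 S l" "open S" "(a, b) \<in> S"
  shows "pd2 (\<lambda>x y. g x y - k x y * l x y) a b = pd2 g a b - (pd2 k a b * l a b + k a b * pd2 l a b)"
  using DERIV_diff[OF diff2_line2[OF assms(1,4,5)] DERIV_mult[OF diff2_line2[OF assms(2,4,5)] diff2_line2[OF assms(3,4,5)]]] by (intro pd2_of) (simp add: algebra_simps)

lemma pd1_addmult:
  assumes "diff2 S g" "diff2 S k" "diff2 S l" "open S" "(a, b) \<in> S"
  shows "pd1 (\<lambda>x y. g x y + k x y * l x y) a b = pd1 g a b + (pd1 k a b * l a b + k a b * pd1 l a b)"
  using DERIV_add[OF diff2_line1[OF assms(1,4,5)] DERIV_mult[OF diff2_line1[OF assms(2,4,5)] diff2_line1[OF assms(3,4,5)]]] by (intro pd1_of) (simp add: algebra_simps)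

lemma pd2_addmult:
  assumes "diff2 S g" "diff2 S k" "diff2 S l" "open S" "(a, b) \<in> S"
  shows "pd2 (\<lambda>x y. g x y + k x y * l x y) a b = pd2 g a b + (pd2 k a b * l a b + k a b * pd2 l a b)"
  using DERIV_add[OF diff2_line2[OF assms(1,4,5)] DERIV_mult[OF diff2_line2[OF assms(2,4,5)] diff2_line2[OF assms(3,4,5)]]] by (intro pd2_of) (simp add: algebra_simps)

theorem ift2_smooth:
  fixes X T :: fn2
  assumes W: "open W" and p0: "(a0, b0) \<in> W" and sX: "smooth2_on W X" and sT: "smooth2_on W T"
    and J0: "pd1 X a0 b0 * pd2 T a0 b0 - pd2 X a0 b0 * pd1 T a0 b0 \<noteq> 0"
  obtains W' N u v where "open W'" "W' \<subseteq> W" "(a0, b0) \<in> W'" "open N" "(X a0 b0, T a0 b0) \<in> N"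
    "\<And>a b. (a, b) \<in> W' \<Longrightarrow> (X a b, T a b) \<in> N \<and> u (X a b) (T a b) = a \<and> v (X a b) (T a b) = b"
    "\<And>x t. (x, t) \<in> N \<Longrightarrow> (u x t, v x t) \<in> W' \<and> X (u x t) (v x t) = x \<and> T (u x t) (v x t) = t"
    "smooth2_on N u" "smooth2_on N v"
    "\<And>x t. (x, t) \<in> N \<Longrightarrow>
       (let a = u x t; b = v x t; J = pd1 X a b * pd2 T a b - pd2 X a b * pd1 T a b in
        J \<noteq> 0 \<and> pd1 u x t = pd2 T a b / J \<and> pd2 u x t = - pd2 X a b / J
        \<and> pd1 v x t = - pd1 T a b / J \<and> pd2 v x t = pd1 X a b / J)"
proof -
  obtain W' N u v where W': "open W'" "W' \<subseteq> W" "(a0, b0) \<in> W'" and N: "open N" "(X a0 b0, T a0 b0) \<in> N"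
    and fw: "\<And>a b. (a, b) \<in> W' \<Longrightarrow> (X a b, T a b) \<in> N \<and> u (X a b) (T a b) = a \<and> v (X a b) (T a b) = b"
    and bw: "\<And>x t. (x, t) \<in> N \<Longrightarrow> (u x t, v x t) \<in> W' \<and> X (u x t) (v x t) = x \<and> T (u x t) (v x t) = t"
    and du: "diff2 N u" and dv: "diff2 N v"
    and der: "\<And>x t. (x, t) \<in> N \<Longrightarrow>
       (let a = u x t; b = v x t; J = pd1 X a b * pd2 T a b - pd2 X a b * pd1 T a b in
        J \<noteq> 0 \<and> pd1 u x t = pd2 T a b / J \<and> pd2 u x t = - pd2 X a b / J
        \<and> pd1 v x t = - pd1 T a b / J \<and> pd2 v x t = pd1 X a b / J)"
    using ift2[OF W p0 sX sT J0] by blast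
  define Jf where "Jf = (\<lambda>a b. pd1 X a b * pd2 T a b - pd2 X a b * pd1 T a b)"
  have sJ: "smooth2_on W Jf" unfolding Jf_def
    by (intro smooth_diff smooth_mult W smooth_pd1 smooth_pd2 sX sT)
  define W2 where "W2 = W' \<inter> (\<lambda>p. Jf (fst p) (snd p)) -` (- {0})"
  have W2: "open W2" unfolding W2_def
    by (rule continuous_open_preimage[OF continuous_on_subset[OF smooth_cont[OF sJ] W'(2)] W'(1)]) auto
  have W2W: "W2 \<subseteq> W" using W'(2) by (auto simp: W2_def)
  have nz: "\<And>a b. (a, b) \<in> W2 \<Longrightarrow> Jf a b \<noteq> 0" by (auto simp: W2_def)
  have mem: "\<And>x t. (x, t) \<in> N \<Longrightarrow> (u x t, v x t) \<in> W2"
    using bw der unfolding W2_def Jf_def Let_def by auto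
  have sJ2: "smooth2_on W2 Jf" using smooth_subset[OF sJ W2W] .
  have s: "smooth2_on W2 (\<lambda>a b. pd2 T a b / Jf a b)" "smooth2_on W2 (\<lambda>a b. - pd2 X a b / Jf a b)"
          "smooth2_on W2 (\<lambda>a b. - pd1 T a b / Jf a b)" "smooth2_on W2 (\<lambda>a b. pd1 X a b / Jf a b)"
    by (intro smooth_divide W2 sJ2 nz smooth_minus smooth_pd1 smooth_pd2 smooth_subset[OF sX W2W] smooth_subset[OF sT W2W]; assumption)+
  have e: "\<And>x t. (x, t) \<in> N \<Longrightarrow> pd1 u x t = (\<lambda>a b. pd2 T a b / Jf a b) (u x t) (v x t) \<and> pd2 u x t = (\<lambda>a b. - pd2 X a b / Jf a b) (u x t) (v x t)
                \<and> pd1 v x t = (\<lambda>a b. - pd1 T a b / Jf a b) (u x t) (v x t) \<and> pd2 v x t = (\<lambda>a b. pd1 X a b / Jf a b) (u x t) (v x t)"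
    using der unfolding Jf_def Let_def by simp
  have su: "smooth2_on N (\<lambda>x t. (\<lambda>a b. a) (u x t) (v x t))"
    by (rule smooth_compose_inv[OF N(1) W2 du dv mem s e smooth_lin(2)[OF W2]])
  have sv: "smooth2_on N (\<lambda>x t. (\<lambda>a b. b) (u x t) (v x t))"
    by (rule smooth_compose_inv[OF N(1) W2 du dv mem s e smooth_lin(3)[OF W2]])
  show ?thesis using that[OF W' N fw bw _ _ der] su sv by simp
qed



lemma alg_J:
  fixes hvv fvv T Ta Tb Xa Xb huv huuv fuuv huvv fuvv hvvv fvvv :: real
  assumes h: "hvv \<noteq> 0" and T: "T = fvv / hvv"
    and Ta: "Ta = (fuvv * hvv - fvv * huvv) / (hvv * hvv)"
    and Tb: "Tb = (fvvv * hvv - fvv * hvvv) / (hvv * hvv)"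
    and Xa: "Xa = fuuv - (Ta * huv + T * huuv)"
    and Xb: "Xb = fuvv - (Tb * huv + T * huvv)"
  shows "Xa * Tb - Xb * Ta = ((T * huuv - fuuv) * (T * hvvv - fvvv) - (T * huvv - fuvv)\<^sup>2) / hvv"
proof -
  have Ta': "Ta = - (T * huvv - fuvv) / hvv" using h unfolding Ta T by (simp add: field_simps)
  have Tb': "Tb = - (T * hvvv - fvvv) / hvv" using h unfolding Tb T by (simp add: field_simps)
  show ?thesis unfolding Xa Xb Ta' Tb' using h by (simp add: field_simps power2_eq_square)
qed

lemma alg_sys:
  fixes hvv fvv T Ta Tb Xa Xb huv huu huuv fuuv huvv fuvv hvvv fvvv fuu J :: real
  assumes h: "hvv \<noteq> 0" and T: "T = fvv / hvv"
    and Ta: "Ta = (fuvv * hvv - fvv * huvv) / (hvv * hvv)"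
    and Tb: "Tb = (fvvv * hvv - fvv * hvvv) / (hvv * hvv)"
    and Xa: "Xa = fuuv - (Ta * huv + T * huuv)"
    and Xb: "Xb = fuvv - (Tb * huv + T * huvv)"
    and pde: "huu * fvv = hvv * fuu"
    and dpde: "huuv * fvv + huu * fvvv = hvvv * fuu + hvv * fuuv"
  shows "- Xb / J = huv * (Tb / J) + hvv * (- Ta / J)"
    and "Xa / J = huu * (Tb / J) + huv * (- Ta / J)"
proof -
  have Ta': "hvv * Ta = fuvv - T * huvv" using h unfolding Ta T by (simp add: field_simps)
  have "- Xb = huv * Tb - hvv * Ta" unfolding Xb Ta' by (simp add: algebra_simps)
  then have "- Xb / J = (huv * Tb - hvv * Ta) / J" by simp
  then show "- Xb / J = huv * (Tb / J) + hvv * (- Ta / J)" by (simp add: diff_divide_distrib)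
  have fuu: "fuu = huu * fvv / hvv" using pde h by (simp add: field_simps)
  have "hvv * (fuuv - T * huuv) = huu * (fvvv - T * hvvv)"
    using dpde h unfolding fuu T by (simp add: field_simps)
  moreover have "hvv * Tb = fvvv - T * hvvv" using h unfolding Tb T by (simp add: field_simps)
  ultimately have "fuuv - T * huuv = huu * Tb" using h
    by (metis (no_types, lifting) mult.left_commute mult_left_cancel)
  then have "Xa = huu * Tb - huv * Ta" unfolding Xa by (simp add: algebra_simps)
  then show "Xa / J = huu * (Tb / J) + huv * (- Ta / J)" by (simp add: diff_divide_distrib)
qed

lemma part2:
  fixes h f :: fn2 and D W :: "(real \<times> real) set"
  assumes D_open: "open D" and h_smooth: "smooth2_on D h"
    and h_nondeg: "\<forall>(a, b) \<in> D. pd1 (pd1 h) a b * pd2 (pd2 h) a b \<noteq> 0"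
    and W: "open W" and p0: "(u0, v0) \<in> W" and WD: "W \<subseteq> D" and f: "smooth2_on W f"
    and pde: "\<forall>(a, b) \<in> W. pd1 (pd1 h) a b * pd2 (pd2 f) a b = pd2 (pd2 h) a b * pd1 (pd1 f) a b"
    and e1: "x0 + t0 * pd1 (pd2 h) u0 v0 = pd1 (pd2 f) u0 v0"
    and e2: "t0 * pd2 (pd2 h) u0 v0 = pd2 (pd2 f) u0 v0"
    and det: "(t0 * pd2 (pd1 (pd1 h)) u0 v0 - pd2 (pd1 (pd1 f)) u0 v0)
            * (t0 * pd2 (pd2 (pd2 h)) u0 v0 - pd2 (pd2 (pd2 f)) u0 v0)
          - (t0 * pd2 (pd2 (pd1 h)) u0 v0 - pd2 (pd2 (pd1 f)) u0 v0)\<^sup>2 \<noteq> 0"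
  shows "\<exists>(u :: real \<Rightarrow> real \<Rightarrow> real) (v :: real \<Rightarrow> real \<Rightarrow> real) N V.
             open N \<and> (x0, t0) \<in> N \<and> open V \<and> (u0, v0) \<in> V \<and> V \<subseteq> W
             \<and> u x0 t0 = u0 \<and> v x0 t0 = v0
             \<and> (\<forall>(x, t) \<in> N. (u x t, v x t) \<in> V
                  \<and> x + t * pd1 (pd2 h) (u x t) (v x t) = pd1 (pd2 f) (u x t) (v x t)
                  \<and> t * pd2 (pd2 h) (u x t) (v x t) = pd2 (pd2 f) (u x t) (v x t))
             \<and> (\<forall>(x, t) \<in> N. \<forall>(a, b) \<in> V.
                  x + t * pd1 (pd2 h) a b = pd1 (pd2 f) a b
                  \<and> t * pd2 (pd2 h) a b = pd2 (pd2 f) a b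
                  \<longrightarrow> a = u x t \<and> b = v x t)
             \<and> smooth2_on N u \<and> smooth2_on N v
             \<and> (\<forall>(x, t) \<in> N.
                  pd2 u x t = pd1 (pd2 h) (u x t) (v x t) * pd1 u x t
                              + pd2 (pd2 h) (u x t) (v x t) * pd1 v x t
                \<and> pd2 v x t = pd1 (pd1 h) (u x t) (v x t) * pd1 u x t
                              + pd1 (pd2 h) (u x t) (v x t) * pd1 v x t)"
proof -
  have hW: "smooth2_on W h" using smooth_subset[OF h_smooth WD] .
  have hvv0: "\<And>a b. (a, b) \<in> W \<Longrightarrow> pd2 (pd2 h) a b \<noteq> 0" using h_nondeg WD by auto
  define Tq where "Tq = (\<lambda>a b. pd2 (pd2 f) a b / pd2 (pd2 h) a b)"
  define Xq where "Xq = (\<lambda>a b. pd1 (pd2 f) a b - Tq a b * pd1 (pd2 h) a b)"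
  have sT: "smooth2_on W Tq" unfolding Tq_def
    by (rule smooth_divide[OF W smooth_pd2[OF smooth_pd2[OF f]] smooth_pd2[OF smooth_pd2[OF hW]] hvv0])
  have sX: "smooth2_on W Xq" unfolding Xq_def
    by (rule smooth_diff[OF W smooth_pd1[OF smooth_pd2[OF f]] smooth_mult[OF W sT smooth_pd1[OF smooth_pd2[OF hW]]]])
  have dT: "pd1 Tq a b = (pd2 (pd2 (pd1 f)) a b * pd2 (pd2 h) a b - pd2 (pd2 f) a b * pd2 (pd2 (pd1 h)) a b)
             / (pd2 (pd2 h) a b * pd2 (pd2 h) a b)"
           "pd2 Tq a b = (pd2 (pd2 (pd2 f)) a b * pd2 (pd2 h) a b - pd2 (pd2 f) a b * pd2 (pd2 (pd2 h)) a b)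
             / (pd2 (pd2 h) a b * pd2 (pd2 h) a b)"
    if ab: "(a, b) \<in> W" for a b
  proof -
    note d = smooth_diff2[OF smooth_pd2[OF smooth_pd2[OF f]]] smooth_diff2[OF smooth_pd2[OF smooth_pd2[OF hW]]]
    show "pd1 Tq a b = (pd2 (pd2 (pd1 f)) a b * pd2 (pd2 h) a b - pd2 (pd2 f) a b * pd2 (pd2 (pd1 h)) a b)
             / (pd2 (pd2 h) a b * pd2 (pd2 h) a b)"
      unfolding Tq_def using pd1_div[OF d W ab hvv0[OF ab]] sym3(2)[OF W f ab] sym3(2)[OF W hW ab] by simp
    show "pd2 Tq a b = (pd2 (pd2 (pd2 f)) a b * pd2 (pd2 h) a b - pd2 (pd2 f) a b * pd2 (pd2 (pd2 h)) a b)
             / (pd2 (pd2 h) a b * pd2 (pd2 h) a b)"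
      unfolding Tq_def using pd2_div[OF d W ab hvv0[OF ab]] by simp
  qed
  have dX: "pd1 Xq a b = pd2 (pd1 (pd1 f)) a b - (pd1 Tq a b * pd1 (pd2 h) a b + Tq a b * pd2 (pd1 (pd1 h)) a b)"
           "pd2 Xq a b = pd2 (pd2 (pd1 f)) a b - (pd2 Tq a b * pd1 (pd2 h) a b + Tq a b * pd2 (pd2 (pd1 h)) a b)"
    if ab: "(a, b) \<in> W" for a b
  proof -
    note d = smooth_diff2[OF smooth_pd1[OF smooth_pd2[OF f]]] smooth_diff2[OF sT] smooth_diff2[OF smooth_pd1[OF smooth_pd2[OF hW]]]
    show "pd1 Xq a b = pd2 (pd1 (pd1 f)) a b - (pd1 Tq a b * pd1 (pd2 h) a b + Tq a b * pd2 (pd1 (pd1 h)) a b)"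
      unfolding Xq_def using pd1_diffmult[OF d W ab] sym3(3)[OF W f ab] sym3(3)[OF W hW ab] by simp
    show "pd2 Xq a b = pd2 (pd2 (pd1 f)) a b - (pd2 Tq a b * pd1 (pd2 h) a b + Tq a b * pd2 (pd2 (pd1 h)) a b)"
      unfolding Xq_def using pd2_diffmult[OF d W ab] sym3(4)[OF W f ab] sym3(4)[OF W hW ab] by simp
  qed
  have pdeW: "pd1 (pd1 h) a b * pd2 (pd2 f) a b = pd2 (pd2 h) a b * pd1 (pd1 f) a b" if "(a, b) \<in> W" for a b
    using pde that by auto
  have dpde: "pd2 (pd1 (pd1 h)) a b * pd2 (pd2 f) a b + pd1 (pd1 h) a b * pd2 (pd2 (pd2 f)) a b
      = pd2 (pd2 (pd2 h)) a b * pd1 (pd1 f) a b + pd2 (pd2 h) a b * pd2 (pd1 (pd1 f)) a b"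
    if ab: "(a, b) \<in> W" for a b
  proof -
    have "eqon W (\<lambda>a b. pd1 (pd1 h) a b * pd2 (pd2 f) a b) (\<lambda>a b. pd2 (pd2 h) a b * pd1 (pd1 f) a b)"
      using pdeW by (auto simp: eqon_def)
    then have "eqon W (pd2 (\<lambda>a b. pd1 (pd1 h) a b * pd2 (pd2 f) a b)) (pd2 (\<lambda>a b. pd2 (pd2 h) a b * pd1 (pd1 f) a b))"
      by (rule eqon_pd2[OF W])
    then show ?thesis
      using pd2_mult[OF smooth_diff2[OF smooth_pd1[OF smooth_pd1[OF hW]]] smooth_diff2[OF smooth_pd2[OF smooth_pd2[OF f]]] W ab]
        pd2_mult[OF smooth_diff2[OF smooth_pd2[OF smooth_pd2[OF hW]]] smooth_diff2[OF smooth_pd1[OF smooth_pd1[OF f]]] W ab] ab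
      by (simp add: eqon_def)
  qed
  have Tv: "Tq a b = pd2 (pd2 f) a b / pd2 (pd2 h) a b" for a b by (simp add: Tq_def)
  have Xv: "Xq a b = pd1 (pd2 f) a b - Tq a b * pd1 (pd2 h) a b" for a b by (simp add: Xq_def)
  have T0: "Tq u0 v0 = t0" using e2 hvv0[OF p0] by (simp add: Tq_def field_simps)
  have X0: "Xq u0 v0 = x0" using e1 T0 by (simp add: Xq_def)
  have J0: "pd1 Xq u0 v0 * pd2 Tq u0 v0 - pd2 Xq u0 v0 * pd1 Tq u0 v0 \<noteq> 0"
  proof -
    have "pd1 Xq u0 v0 * pd2 Tq u0 v0 - pd2 Xq u0 v0 * pd1 Tq u0 v0 =
      ((Tq u0 v0 * pd2 (pd1 (pd1 h)) u0 v0 - pd2 (pd1 (pd1 f)) u0 v0) * (Tq u0 v0 * pd2 (pd2 (pd2 h)) u0 v0 - pd2 (pd2 (pd2 f)) u0 v0)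
       - (Tq u0 v0 * pd2 (pd2 (pd1 h)) u0 v0 - pd2 (pd2 (pd1 f)) u0 v0)\<^sup>2) / pd2 (pd2 h) u0 v0"
      by (rule alg_J[OF hvv0[OF p0] Tv dT(1)[OF p0] dT(2)[OF p0] dX(1)[OF p0] dX(2)[OF p0]])
    then show ?thesis using det hvv0[OF p0] unfolding T0 by simp
  qed
  obtain V N u v where V: "open V" "V \<subseteq> W" "(u0, v0) \<in> V" and N: "open N" "(Xq u0 v0, Tq u0 v0) \<in> N"
    and fw: "\<And>a b. (a, b) \<in> V \<Longrightarrow> (Xq a b, Tq a b) \<in> N \<and> u (Xq a b) (Tq a b) = a \<and> v (Xq a b) (Tq a b) = b"
    and bw: "\<And>x t. (x, t) \<in> N \<Longrightarrow> (u x t, v x t) \<in> V \<and> Xq (u x t) (v x t) = x \<and> Tq (u x t) (v x t) = t"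
    and su: "smooth2_on N u" and sv: "smooth2_on N v"
    and der: "\<And>x t. (x, t) \<in> N \<Longrightarrow>
       (let a = u x t; b = v x t; J = pd1 Xq a b * pd2 Tq a b - pd2 Xq a b * pd1 Tq a b in
        J \<noteq> 0 \<and> pd1 u x t = pd2 Tq a b / J \<and> pd2 u x t = - pd2 Xq a b / J
        \<and> pd1 v x t = - pd1 Tq a b / J \<and> pd2 v x t = pd1 Xq a b / J)"
    using ift2_smooth[OF W p0 sX sT J0] by blast
  have eqs: "(u x t, v x t) \<in> V \<and> x + t * pd1 (pd2 h) (u x t) (v x t) = pd1 (pd2 f) (u x t) (v x t)
                  \<and> t * pd2 (pd2 h) (u x t) (v x t) = pd2 (pd2 f) (u x t) (v x t)" if xt: "(x, t) \<in> N" for x t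
  proof -
    have m: "(u x t, v x t) \<in> V" and X: "Xq (u x t) (v x t) = x" and T: "Tq (u x t) (v x t) = t"
      using bw[OF xt] by auto
    have nz: "pd2 (pd2 h) (u x t) (v x t) \<noteq> 0" using hvv0 m V(2) by auto
    have 2: "t * pd2 (pd2 h) (u x t) (v x t) = pd2 (pd2 f) (u x t) (v x t)"
      using T nz unfolding Tv by (simp add: field_simps)
    have 1: "x + t * pd1 (pd2 h) (u x t) (v x t) = pd1 (pd2 f) (u x t) (v x t)"
      using X T unfolding Xv by simp
    show ?thesis using m 1 2 by blast
  qed
  have uniq: "a = u x t \<and> b = v x t"
    if xt: "(x, t) \<in> N" and ab: "(a, b) \<in> V" and q1: "x + t * pd1 (pd2 h) a b = pd1 (pd2 f) a b"
      and q2: "t * pd2 (pd2 h) a b = pd2 (pd2 f) a b" for x t a b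
  proof -
    have nz: "pd2 (pd2 h) a b \<noteq> 0" using hvv0 ab V(2) by auto
    have T: "Tq a b = t" using q2 nz unfolding Tv by (simp add: field_simps)
    have X: "Xq a b = x" using q1 T unfolding Xv by simp
    show ?thesis using fw[OF ab] T X by simp
  qed
  have sys: "pd2 u x t = pd1 (pd2 h) (u x t) (v x t) * pd1 u x t + pd2 (pd2 h) (u x t) (v x t) * pd1 v x t
           \<and> pd2 v x t = pd1 (pd1 h) (u x t) (v x t) * pd1 u x t + pd1 (pd2 h) (u x t) (v x t) * pd1 v x t"
    if xt: "(x, t) \<in> N" for x t
  proof -
    define a where "a = u x t"
    define b where "b = v x t"
    have ab: "(a, b) \<in> W" using bw[OF xt] V(2) by (auto simp: a_def b_def)
    define J where "J = pd1 Xq a b * pd2 Tq a b - pd2 Xq a b * pd1 Tq a b"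
    have D: "pd1 u x t = pd2 Tq a b / J" "pd2 u x t = - pd2 Xq a b / J"
         "pd1 v x t = - pd1 Tq a b / J" "pd2 v x t = pd1 Xq a b / J"
      using der[OF xt] unfolding Let_def a_def[symmetric] b_def[symmetric] J_def[symmetric] by auto
    note A = alg_sys[OF hvv0[OF ab] Tv dT(1)[OF ab] dT(2)[OF ab] dX(1)[OF ab] dX(2)[OF ab] pdeW[OF ab] dpde[OF ab], of J]
    show ?thesis unfolding a_def[symmetric] b_def[symmetric] D using A by simp
  qed
  show ?thesis
    apply (rule exI[of _ u], rule exI[of _ v], rule exI[of _ N], rule exI[of _ V])
    using N V X0 T0 fw[OF V(3)] eqs uniq su sv sys by auto
qed



lemma part1:
  fixes h u v :: fn2 and D N :: "(real \<times> real) set"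
  assumes D_open: "open D" and h_smooth: "smooth2_on D h"
    and h_nondeg: "\<forall>(a, b) \<in> D. pd1 (pd1 h) a b * pd2 (pd2 h) a b \<noteq> 0"
    and N: "open N" and p0: "(x0, t0) \<in> N" and su: "smooth2_on N u" and sv: "smooth2_on N v"
    and inD: "\<forall>(x, t) \<in> N. (u x t, v x t) \<in> D"
    and sys: "\<forall>(x, t) \<in> N.
             pd2 u x t = pd1 (pd2 h) (u x t) (v x t) * pd1 u x t
                         + pd2 (pd2 h) (u x t) (v x t) * pd1 v x t
           \<and> pd2 v x t = pd1 (pd1 h) (u x t) (v x t) * pd1 u x t
                         + pd1 (pd2 h) (u x t) (v x t) * pd1 v x t"
    and nd: "\<forall>(x, t) \<in> N.
             pd1 (pd1 h) (u x t) (v x t) * (pd1 u x t)\<^sup>2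
             - pd2 (pd2 h) (u x t) (v x t) * (pd1 v x t)\<^sup>2 \<noteq> 0"
  shows "\<exists>(f :: real \<Rightarrow> real \<Rightarrow> real) W N'.
             open W \<and> (u x0 t0, v x0 t0) \<in> W \<and> W \<subseteq> D \<and> smooth2_on W f
             \<and> (\<forall>(a, b) \<in> W. pd1 (pd1 h) a b * pd2 (pd2 f) a b
                               = pd2 (pd2 h) a b * pd1 (pd1 f) a b)
             \<and> open N' \<and> (x0, t0) \<in> N' \<and> N' \<subseteq> N
             \<and> (\<forall>(x, t) \<in> N'. (u x t, v x t) \<in> W
                  \<and> x + t * pd1 (pd2 h) (u x t) (v x t) = pd1 (pd2 f) (u x t) (v x t)
                  \<and> t * pd2 (pd2 h) (u x t) (v x t) = pd2 (pd2 f) (u x t) (v x t))"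
proof -
  have sysN: "pd2 u x t = pd1 (pd2 h) (u x t) (v x t) * pd1 u x t + pd2 (pd2 h) (u x t) (v x t) * pd1 v x t"
    "pd2 v x t = pd1 (pd1 h) (u x t) (v x t) * pd1 u x t + pd1 (pd2 h) (u x t) (v x t) * pd1 v x t"
    if "(x, t) \<in> N" for x t using sys that by auto
  have J0: "pd1 u x0 t0 * pd2 v x0 t0 - pd2 u x0 t0 * pd1 v x0 t0 \<noteq> 0"
  proof -
    have "pd1 u x0 t0 * pd2 v x0 t0 - pd2 u x0 t0 * pd1 v x0 t0 =
      pd1 (pd1 h) (u x0 t0) (v x0 t0) * (pd1 u x0 t0)\<^sup>2 - pd2 (pd2 h) (u x0 t0) (v x0 t0) * (pd1 v x0 t0)\<^sup>2"
      unfolding sysN[OF p0] by (simp add: algebra_simps power2_eq_square)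
    then show ?thesis using nd p0 by auto
  qed
  obtain W0 M xq tq where W0: "open W0" "W0 \<subseteq> N" "(x0, t0) \<in> W0" and M: "open M" "(u x0 t0, v x0 t0) \<in> M"
    and fw: "\<And>x t. (x, t) \<in> W0 \<Longrightarrow> (u x t, v x t) \<in> M \<and> xq (u x t) (v x t) = x \<and> tq (u x t) (v x t) = t"
    and bw: "\<And>a b. (a, b) \<in> M \<Longrightarrow> (xq a b, tq a b) \<in> W0 \<and> u (xq a b) (tq a b) = a \<and> v (xq a b) (tq a b) = b"
    and sxq: "smooth2_on M xq" and stq: "smooth2_on M tq"
    and der: "\<And>a b. (a, b) \<in> M \<Longrightarrow>
       (let x = xq a b; t = tq a b; J = pd1 u x t * pd2 v x t - pd2 u x t * pd1 v x t in
        J \<noteq> 0 \<and> pd1 xq a b = pd2 v x t / J \<and> pd2 xq a b = - pd2 u x t / J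
        \<and> pd1 tq a b = - pd1 v x t / J \<and> pd2 tq a b = pd1 u x t / J)"
    using ift2_smooth[OF N p0 su sv J0] by blast
  have MD: "M \<subseteq> D"
  proof clarify
    fix a b assume ab: "(a, b) \<in> M"
    then have "(xq a b, tq a b) \<in> N" using bw W0(2) by blast
    then show "(a, b) \<in> D" using inD bw[OF ab] by auto
  qed
  have hM: "smooth2_on M h" using smooth_subset[OF h_smooth MD] .
  define Rp where "Rp = (\<lambda>a b. xq a b + tq a b * pd1 (pd2 h) a b)"
  define Rq where "Rq = (\<lambda>a b. tq a b * pd2 (pd2 h) a b)"
  define Pp where "Pp = (\<lambda>a b. tq a b * pd1 (pd1 h) a b)"
  have sRp: "smooth2_on M Rp" unfolding Rp_def
    by (rule smooth_add[OF M(1) sxq smooth_mult[OF M(1) stq smooth_pd1[OF smooth_pd2[OF hM]]]])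
  have sRq: "smooth2_on M Rq" unfolding Rq_def
    by (rule smooth_mult[OF M(1) stq smooth_pd2[OF smooth_pd2[OF hM]]])
  have sPp: "smooth2_on M Pp" unfolding Pp_def
    by (rule smooth_mult[OF M(1) stq smooth_pd1[OF smooth_pd1[OF hM]]])
  have loc: "pd2 xq a b + pd2 tq a b * pd1 (pd2 h) a b = pd1 tq a b * pd2 (pd2 h) a b
           \<and> pd2 tq a b * pd1 (pd1 h) a b = pd1 xq a b + pd1 tq a b * pd1 (pd2 h) a b"
    if ab: "(a, b) \<in> M" for a b
  proof -
    define x where "x = xq a b"
    define t where "t = tq a b"
    have xt: "(x, t) \<in> N" using bw[OF ab] W0(2) by (auto simp: x_def t_def)
    have ua: "u x t = a" "v x t = b" using bw[OF ab] by (auto simp: x_def t_def)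
    define J where "J = pd1 u x t * pd2 v x t - pd2 u x t * pd1 v x t"
    have D: "J \<noteq> 0" "pd1 xq a b = pd2 v x t / J" "pd2 xq a b = - pd2 u x t / J"
         "pd1 tq a b = - pd1 v x t / J" "pd2 tq a b = pd1 u x t / J"
      using der[OF ab] unfolding Let_def x_def[symmetric] t_def[symmetric] J_def[symmetric] by auto
    have s1: "pd2 u x t = pd1 (pd2 h) a b * pd1 u x t + pd2 (pd2 h) a b * pd1 v x t"
      using sysN(1)[OF xt] unfolding ua .
    have s2: "pd2 v x t = pd1 (pd1 h) a b * pd1 u x t + pd1 (pd2 h) a b * pd1 v x t"
      using sysN(2)[OF xt] unfolding ua .
    show ?thesis unfolding D(2-5) using s1 s2 D(1) by (simp add: field_simps)
  qed
  have comp1: "eqon M (pd2 Rp) (pd1 Rq)"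
    unfolding eqon_def
  proof (intro allI impI)
    fix a b assume ab: "(a, b) \<in> M"
    have "pd2 Rp a b = pd2 xq a b + (pd2 tq a b * pd1 (pd2 h) a b + tq a b * pd2 (pd1 (pd2 h)) a b)"
      unfolding Rp_def by (rule pd2_addmult[OF smooth_diff2[OF sxq] smooth_diff2[OF stq] smooth_diff2[OF smooth_pd1[OF smooth_pd2[OF hM]]] M(1) ab])
    moreover have "pd1 Rq a b = pd1 tq a b * pd2 (pd2 h) a b + tq a b * pd1 (pd2 (pd2 h)) a b"
      unfolding Rq_def by (rule pd1_mult[OF smooth_diff2[OF stq] smooth_diff2[OF smooth_pd2[OF smooth_pd2[OF hM]]] M(1) ab])
    moreover have "pd2 (pd1 (pd2 h)) a b = pd1 (pd2 (pd2 h)) a b"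
      by (rule schwarz[OF M(1) smooth_pd2[OF hM] ab])
    ultimately show "pd2 Rp a b = pd1 Rq a b" using loc[OF ab] by (simp add: algebra_simps)
  qed
  have comp2: "eqon M (pd2 Pp) (pd1 Rp)"
    unfolding eqon_def
  proof (intro allI impI)
    fix a b assume ab: "(a, b) \<in> M"
    have "pd2 Pp a b = pd2 tq a b * pd1 (pd1 h) a b + tq a b * pd2 (pd1 (pd1 h)) a b"
      unfolding Pp_def by (rule pd2_mult[OF smooth_diff2[OF stq] smooth_diff2[OF smooth_pd1[OF smooth_pd1[OF hM]]] M(1) ab])
    moreover have "pd1 Rp a b = pd1 xq a b + (pd1 tq a b * pd1 (pd2 h) a b + tq a b * pd1 (pd1 (pd2 h)) a b)"
      unfolding Rp_def by (rule pd1_addmult[OF smooth_diff2[OF sxq] smooth_diff2[OF stq] smooth_diff2[OF smooth_pd1[OF smooth_pd2[OF hM]]] M(1) ab])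
    moreover have "pd1 (pd1 (pd2 h)) a b = pd2 (pd1 (pd1 h)) a b"
      by (rule sym3(3)[OF M(1) hM ab])
    ultimately show "pd2 Pp a b = pd1 Rp a b" using loc[OF ab] by (simp add: algebra_simps)
  qed
  obtain Ob1 R1 where O1: "open Ob1" "(u x0 t0, v x0 t0) \<in> Ob1" "Ob1 \<subseteq> M" and sR1: "smooth2_on Ob1 R1"
    and R1a: "eqon Ob1 (pd1 R1) Rp" and R1b: "eqon Ob1 (pd2 R1) Rq"
    using poincare[OF M(1) sRp sRq comp1 M(2)] by blast
  have comp2': "eqon Ob1 (pd2 Pp) (pd1 Rp)" using comp2 O1(3) by (auto simp: eqon_def)
  obtain Ob2 P1 where O2: "open Ob2" "(u x0 t0, v x0 t0) \<in> Ob2" "Ob2 \<subseteq> Ob1" and sP1: "smooth2_on Ob2 P1"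
    and P1a: "eqon Ob2 (pd1 P1) Pp" and P1b: "eqon Ob2 (pd2 P1) Rp"
    using poincare[OF O1(1) smooth_subset[OF sPp O1(3)] smooth_subset[OF sRp O1(3)] comp2' O1(2)] by blast
  have comp3: "eqon Ob2 (pd2 P1) (pd1 R1)" using P1b R1a O2(3) by (auto simp: eqon_def)
  obtain Ob3 f where O3: "open Ob3" "(u x0 t0, v x0 t0) \<in> Ob3" "Ob3 \<subseteq> Ob2" and sf: "smooth2_on Ob3 f"
    and fa: "eqon Ob3 (pd1 f) P1" and fb: "eqon Ob3 (pd2 f) R1"
    using poincare[OF O2(1) sP1 smooth_subset[OF sR1 O2(3)] comp3 O2(2)] by blast
  have O3M: "Ob3 \<subseteq> M" using O1(3) O2(3) O3(3) by blast
  have fuv: "pd1 (pd2 f) a b = Rp a b" and fvv: "pd2 (pd2 f) a b = Rq a b" and fuu: "pd1 (pd1 f) a b = Pp a b"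
    if ab: "(a, b) \<in> Ob3" for a b
  proof -
    have "pd1 (pd2 f) a b = pd1 R1 a b" using eqon_pd1[OF O3(1) fb] ab by (simp add: eqon_def)
    also have "\<dots> = Rp a b" using R1a ab O2(3) O3(3) by (auto simp: eqon_def)
    finally show "pd1 (pd2 f) a b = Rp a b" .
    have "pd2 (pd2 f) a b = pd2 R1 a b" using eqon_pd2[OF O3(1) fb] ab by (simp add: eqon_def)
    also have "\<dots> = Rq a b" using R1b ab O2(3) O3(3) by (auto simp: eqon_def)
    finally show "pd2 (pd2 f) a b = Rq a b" .
    have "pd1 (pd1 f) a b = pd1 P1 a b" using eqon_pd1[OF O3(1) fa] ab by (simp add: eqon_def)
    also have "\<dots> = Pp a b" using P1a ab O3(3) by (auto simp: eqon_def)
    finally show "pd1 (pd1 f) a b = Pp a b" .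
  qed
  define N' where "N' = W0 \<inter> (\<lambda>p. (u (fst p) (snd p), v (fst p) (snd p))) -` Ob3"
  have cont: "continuous_on W0 (\<lambda>p. (u (fst p) (snd p), v (fst p) (snd p)))"
    using continuous_on_subset[OF smooth_cont[OF su] W0(2)] continuous_on_subset[OF smooth_cont[OF sv] W0(2)]
    by (intro continuous_on_Pair)
  have N'o: "open N'" unfolding N'_def by (rule continuous_open_preimage[OF cont W0(1) O3(1)])
  show ?thesis
  proof (intro exI conjI)
    show "open Ob3" "(u x0 t0, v x0 t0) \<in> Ob3" "smooth2_on Ob3 f" by fact+
    show "Ob3 \<subseteq> D" using O3M MD by blast
    show "\<forall>(a, b) \<in> Ob3. pd1 (pd1 h) a b * pd2 (pd2 f) a b = pd2 (pd2 h) a b * pd1 (pd1 f) a b"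
      using fvv fuu by (auto simp: Rq_def Pp_def)
    show "open N'" by fact
    show "(x0, t0) \<in> N'" using W0(3) O3(2) by (simp add: N'_def)
    show "N' \<subseteq> N" using W0(2) by (auto simp: N'_def)
    show "\<forall>(x, t) \<in> N'. (u x t, v x t) \<in> Ob3
                  \<and> x + t * pd1 (pd2 h) (u x t) (v x t) = pd1 (pd2 f) (u x t) (v x t)
                  \<and> t * pd2 (pd2 h) (u x t) (v x t) = pd2 (pd2 f) (u x t) (v x t)"
    proof clarify
      fix x t assume "(x, t) \<in> N'"
      then have xt: "(x, t) \<in> W0" and m: "(u x t, v x t) \<in> Ob3" by (auto simp: N'_def)
      have "xq (u x t) (v x t) = x" "tq (u x t) (v x t) = t" using fw[OF xt] by auto
      then show "(u x t, v x t) \<in> Ob3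
                  \<and> x + t * pd1 (pd2 h) (u x t) (v x t) = pd1 (pd2 f) (u x t) (v x t)
                  \<and> t * pd2 (pd2 h) (u x t) (v x t) = pd2 (pd2 f) (u x t) (v x t)"
        using m fuv[OF m] fvv[OF m] by (simp add: Rp_def Rq_def)
    qed
  qed
qed



theorem mainTheorem1:
  fixes h :: "real \<Rightarrow> real \<Rightarrow> real" and D :: "(real \<times> real) set"
  assumes D_open: "open D"
    and h_smooth: "smooth2_on D h"
    and h_nondeg: "\<forall>(a, b) \<in> D. pd1 (pd1 h) a b * pd2 (pd2 h) a b \<noteq> 0"
  shows
    "(\<forall>(u :: real \<Rightarrow> real \<Rightarrow> real) (v :: real \<Rightarrow> real \<Rightarrow> real) N x0 t0.
        open N \<and> (x0, t0) \<in> N \<and> smooth2_on N u \<and> smooth2_on N v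
        \<and> (\<forall>(x, t) \<in> N. (u x t, v x t) \<in> D)
        \<and> (\<forall>(x, t) \<in> N.
             pd2 u x t = pd1 (pd2 h) (u x t) (v x t) * pd1 u x t
                         + pd2 (pd2 h) (u x t) (v x t) * pd1 v x t
           \<and> pd2 v x t = pd1 (pd1 h) (u x t) (v x t) * pd1 u x t
                         + pd1 (pd2 h) (u x t) (v x t) * pd1 v x t)
        \<and> (\<forall>(x, t) \<in> N.
             pd1 (pd1 h) (u x t) (v x t) * (pd1 u x t)\<^sup>2
             - pd2 (pd2 h) (u x t) (v x t) * (pd1 v x t)\<^sup>2 \<noteq> 0)
      \<longrightarrow> (\<exists>(f :: real \<Rightarrow> real \<Rightarrow> real) W N'.
             open W \<and> (u x0 t0, v x0 t0) \<in> W \<and> W \<subseteq> D \<and> smooth2_on W f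
             \<and> (\<forall>(a, b) \<in> W. pd1 (pd1 h) a b * pd2 (pd2 f) a b
                               = pd2 (pd2 h) a b * pd1 (pd1 f) a b)
             \<and> open N' \<and> (x0, t0) \<in> N' \<and> N' \<subseteq> N
             \<and> (\<forall>(x, t) \<in> N'. (u x t, v x t) \<in> W
                  \<and> x + t * pd1 (pd2 h) (u x t) (v x t) = pd1 (pd2 f) (u x t) (v x t)
                  \<and> t * pd2 (pd2 h) (u x t) (v x t) = pd2 (pd2 f) (u x t) (v x t))))
   \<and> (\<forall>(f :: real \<Rightarrow> real \<Rightarrow> real) W u0 v0 x0 t0.
        open W \<and> (u0, v0) \<in> W \<and> W \<subseteq> D \<and> smooth2_on W f
        \<and> (\<forall>(a, b) \<in> W. pd1 (pd1 h) a b * pd2 (pd2 f) a b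
                          = pd2 (pd2 h) a b * pd1 (pd1 f) a b)
        \<and> x0 + t0 * pd1 (pd2 h) u0 v0 = pd1 (pd2 f) u0 v0
        \<and> t0 * pd2 (pd2 h) u0 v0 = pd2 (pd2 f) u0 v0
        \<and> (t0 * pd2 (pd1 (pd1 h)) u0 v0 - pd2 (pd1 (pd1 f)) u0 v0)
            * (t0 * pd2 (pd2 (pd2 h)) u0 v0 - pd2 (pd2 (pd2 f)) u0 v0)
          - (t0 * pd2 (pd2 (pd1 h)) u0 v0 - pd2 (pd2 (pd1 f)) u0 v0)\<^sup>2 \<noteq> 0
      \<longrightarrow> (\<exists>(u :: real \<Rightarrow> real \<Rightarrow> real) (v :: real \<Rightarrow> real \<Rightarrow> real) N V.
             open N \<and> (x0, t0) \<in> N \<and> open V \<and> (u0, v0) \<in> V \<and> V \<subseteq> W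
             \<and> u x0 t0 = u0 \<and> v x0 t0 = v0
             \<and> (\<forall>(x, t) \<in> N. (u x t, v x t) \<in> V
                  \<and> x + t * pd1 (pd2 h) (u x t) (v x t) = pd1 (pd2 f) (u x t) (v x t)
                  \<and> t * pd2 (pd2 h) (u x t) (v x t) = pd2 (pd2 f) (u x t) (v x t))
             \<and> (\<forall>(x, t) \<in> N. \<forall>(a, b) \<in> V.
                  x + t * pd1 (pd2 h) a b = pd1 (pd2 f) a b
                  \<and> t * pd2 (pd2 h) a b = pd2 (pd2 f) a b
                  \<longrightarrow> a = u x t \<and> b = v x t)
             \<and> smooth2_on N u \<and> smooth2_on N v
             \<and> (\<forall>(x, t) \<in> N.
                  pd2 u x t = pd1 (pd2 h) (u x t) (v x t) * pd1 u x t
                              + pd2 (pd2 h) (u x t) (v x t) * pd1 v x t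
                \<and> pd2 v x t = pd1 (pd1 h) (u x t) (v x t) * pd1 u x t
                              + pd1 (pd2 h) (u x t) (v x t) * pd1 v x t)))"
proof (intro conjI allI impI)
  fix u v :: fn2 and N :: "(real \<times> real) set" and x0 t0 :: real
  assume H: "open N \<and> (x0, t0) \<in> N \<and> smooth2_on N u \<and> smooth2_on N v
        \<and> (\<forall>(x, t) \<in> N. (u x t, v x t) \<in> D)
        \<and> (\<forall>(x, t) \<in> N.
             pd2 u x t = pd1 (pd2 h) (u x t) (v x t) * pd1 u x t
                         + pd2 (pd2 h) (u x t) (v x t) * pd1 v x t
           \<and> pd2 v x t = pd1 (pd1 h) (u x t) (v x t) * pd1 u x t
                         + pd1 (pd2 h) (u x t) (v x t) * pd1 v x t)
        \<and> (\<forall>(x, t) \<in> N.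
             pd1 (pd1 h) (u x t) (v x t) * (pd1 u x t)\<^sup>2
             - pd2 (pd2 h) (u x t) (v x t) * (pd1 v x t)\<^sup>2 \<noteq> 0)"
  then show "\<exists>(f :: real \<Rightarrow> real \<Rightarrow> real) W N'.
             open W \<and> (u x0 t0, v x0 t0) \<in> W \<and> W \<subseteq> D \<and> smooth2_on W f
             \<and> (\<forall>(a, b) \<in> W. pd1 (pd1 h) a b * pd2 (pd2 f) a b
                               = pd2 (pd2 h) a b * pd1 (pd1 f) a b)
             \<and> open N' \<and> (x0, t0) \<in> N' \<and> N' \<subseteq> N
             \<and> (\<forall>(x, t) \<in> N'. (u x t, v x t) \<in> W
                  \<and> x + t * pd1 (pd2 h) (u x t) (v x t) = pd1 (pd2 f) (u x t) (v x t)
                  \<and> t * pd2 (pd2 h) (u x t) (v x t) = pd2 (pd2 f) (u x t) (v x t))"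
    by (elim conjE) (rule part1[OF D_open h_smooth h_nondeg]; assumption)
next
  fix f :: fn2 and W :: "(real \<times> real) set" and u0 v0 x0 t0 :: real
  assume H: "open W \<and> (u0, v0) \<in> W \<and> W \<subseteq> D \<and> smooth2_on W f
        \<and> (\<forall>(a, b) \<in> W. pd1 (pd1 h) a b * pd2 (pd2 f) a b
                          = pd2 (pd2 h) a b * pd1 (pd1 f) a b)
        \<and> x0 + t0 * pd1 (pd2 h) u0 v0 = pd1 (pd2 f) u0 v0
        \<and> t0 * pd2 (pd2 h) u0 v0 = pd2 (pd2 f) u0 v0
        \<and> (t0 * pd2 (pd1 (pd1 h)) u0 v0 - pd2 (pd1 (pd1 f)) u0 v0)
            * (t0 * pd2 (pd2 (pd2 h)) u0 v0 - pd2 (pd2 (pd2 f)) u0 v0)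
          - (t0 * pd2 (pd2 (pd1 h)) u0 v0 - pd2 (pd2 (pd1 f)) u0 v0)\<^sup>2 \<noteq> 0"
  then show "\<exists>(u :: real \<Rightarrow> real \<Rightarrow> real) (v :: real \<Rightarrow> real \<Rightarrow> real) N V.
             open N \<and> (x0, t0) \<in> N \<and> open V \<and> (u0, v0) \<in> V \<and> V \<subseteq> W
             \<and> u x0 t0 = u0 \<and> v x0 t0 = v0
             \<and> (\<forall>(x, t) \<in> N. (u x t, v x t) \<in> V
                  \<and> x + t * pd1 (pd2 h) (u x t) (v x t) = pd1 (pd2 f) (u x t) (v x t)
                  \<and> t * pd2 (pd2 h) (u x t) (v x t) = pd2 (pd2 f) (u x t) (v x t))
             \<and> (\<forall>(x, t) \<in> N. \<forall>(a, b) \<in> V.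
                  x + t * pd1 (pd2 h) a b = pd1 (pd2 f) a b
                  \<and> t * pd2 (pd2 h) a b = pd2 (pd2 f) a b
                  \<longrightarrow> a = u x t \<and> b = v x t)
             \<and> smooth2_on N u \<and> smooth2_on N v
             \<and> (\<forall>(x, t) \<in> N.
                  pd2 u x t = pd1 (pd2 h) (u x t) (v x t) * pd1 u x t
                              + pd2 (pd2 h) (u x t) (v x t) * pd1 v x t
                \<and> pd2 v x t = pd1 (pd1 h) (u x t) (v x t) * pd1 u x t
                              + pd1 (pd2 h) (u x t) (v x t) * pd1 v x t)"
    by (elim conjE) (rule part2[OF D_open h_smooth h_nondeg]; assumption)
qed

end
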